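(* Let $\Lambda$ be an abelian group and $\mathrm{Coc}=\{c:V\to\prod_{\mathbf{Q}_2}\Lambda:\ c_{vw}=c_v\cdot c_w^v\ \forall v,w\in V\}$, where $c_w^v(x)=c_w(v^{-1}x)$. Then: (1) with the pointwise product $(c\cdot d)_v(x)=c_v(x)d_v(x)$, $\mathrm{Coc}$ is an abelian group; (2) for each $\zeta\in\Lambda$, $s(\zeta)_v(x)=\zeta^{\log_2(v'(v^{-1}x))}$ defines an element of $\mathrm{Coc}$; (3) for every $c\in\mathrm{Coc}$ there exist $\zeta\in\Lambda$ and $f\in\prod_{\mathbf{Q}_2}\Lambda$ with $c_v=s(\zeta)_v\cdot f(f^v)^{-1}$ for all $v\in V$, and the pair $(\zeta,f)$ is unique up to multiplying $f$ by a constant map; (4) the assignment $c\mapsto(\zeta,f)$ is a group isomorphism from $\mathrm{Coc}$ onto $\Lambda\times\big(\prod_{\mathbf{Q}_2}\Lambda\big)/\Lambda$ (with $\Lambda$ embedded as constant maps).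
   Context: Cantor space $\mathfrak C=\{0,1\}^{\mathbf N}$; $C_m=\{m\cdot x\}$. Thompson's group $V$: homeomorphisms $v$ with $v(m_kx)=m'_kx$ for partitions $\mathfrak C=\bigsqcup C_{m_k}=\bigsqcup C_{m'_k}$; slope $v'(x)=2^{|m_k|-|m'_k|}$ on $C_{m_k}$. $\mathbf{Q}_2\subset\mathfrak C$: eventually-zero sequences (a $V$-invariant set). For $f\in\prod_{\mathbf{Q}_2}\Lambda$, $f^v(x)=f(v^{-1}x)$. *)

theory Defs
  imports "HOL-Algebra.Algebra" "HOL-Algebra.Product_Groups"
begin

type_synonym cantor = "nat \<Rightarrow> bool"

definition pre :: "bool list \<Rightarrow> cantor \<Rightarrow> cantor" where
  "pre m x = (\<lambda>n. if n < length m then m ! n else x (n - length m))"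

definition cyl :: "bool list \<Rightarrow> cantor set" where
  "cyl m = range (pre m)"

definition cyl_partition :: "bool list list \<Rightarrow> bool" where
  "cyl_partition ms \<longleftrightarrow> (\<forall>x. \<exists>!k. k < length ms \<and> x \<in> cyl (ms ! k))"

definition represents :: "(cantor \<Rightarrow> cantor) \<Rightarrow> bool list list \<Rightarrow> bool list list \<Rightarrow> bool" where
  "represents v ms ms' \<longleftrightarrow> length ms = length ms' \<and> cyl_partition ms \<and> cyl_partition ms' \<and>
     (\<forall>k < length ms. \<forall>x. v (pre (ms ! k) x) = pre (ms' ! k) x)"

definition thompsonV :: "(cantor \<Rightarrow> cantor) set" where
  "thompsonV = {v. bij v \<and> (\<exists>ms ms'. represents v ms ms')}"

text \<open>log_2 of the slope v'(x): on C_{m_k}, v'(x) = 2^(|m_k| - |m'_k|), so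
  log_2 v'(x) = |m_k| - |m'_k| (independent of the chosen representation)\<close>
definition log2_slope :: "(cantor \<Rightarrow> cantor) \<Rightarrow> cantor \<Rightarrow> int" where
  "log2_slope v x = (SOME d. \<exists>ms ms'. represents v ms ms' \<and>
      (\<exists>k < length ms. x \<in> cyl (ms ! k) \<and> d = int (length (ms ! k)) - int (length (ms' ! k))))"

definition slope :: "(cantor \<Rightarrow> cantor) \<Rightarrow> cantor \<Rightarrow> real" where
  "slope v x = 2 powi log2_slope v x"

definition Q2 :: "cantor set" where
  "Q2 = {x. \<exists>N. \<forall>n\<ge>N. \<not> x n}"

definition PQ :: "('a, 'b) monoid_scheme \<Rightarrow> (cantor \<Rightarrow> 'a) monoid" where
  "PQ L = product_group Q2 (\<lambda>_. L)"

definition constQ :: "('a, 'b) monoid_scheme \<Rightarrow> (cantor \<Rightarrow> 'a) set" where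
  "constQ L = (\<lambda>z. \<lambda>x\<in>Q2. z) ` carrier L"

definition Coc :: "('a, 'b) monoid_scheme \<Rightarrow> ((cantor \<Rightarrow> cantor) \<Rightarrow> cantor \<Rightarrow> 'a) set" where
  "Coc L = {c \<in> (\<Pi>\<^sub>E v\<in>thompsonV. \<Pi>\<^sub>E x\<in>Q2. carrier L).
      \<forall>v\<in>thompsonV. \<forall>w\<in>thompsonV. \<forall>x\<in>Q2.
        c (v \<circ> w) x = c v x \<otimes>\<^bsub>L\<^esub> c w (inv_into UNIV v x)}"

definition CocG :: "('a, 'b) monoid_scheme \<Rightarrow> ((cantor \<Rightarrow> cantor) \<Rightarrow> cantor \<Rightarrow> 'a) monoid" where
  "CocG L = (product_group thompsonV (\<lambda>_. PQ L)) \<lparr>carrier := Coc L\<rparr>"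

definition sC :: "('a, 'b) monoid_scheme \<Rightarrow> 'a \<Rightarrow> (cantor \<Rightarrow> cantor) \<Rightarrow> cantor \<Rightarrow> 'a" where
  "sC L z = (\<lambda>v\<in>thompsonV. \<lambda>x\<in>Q2. z [^]\<^bsub>L\<^esub> log2_slope v (inv_into UNIV v x))"

definition decomp :: "('a, 'b) monoid_scheme \<Rightarrow> ((cantor \<Rightarrow> cantor) \<Rightarrow> cantor \<Rightarrow> 'a) \<Rightarrow> 'a \<Rightarrow> (cantor \<Rightarrow> 'a) \<Rightarrow> bool" where
  "decomp L c z f \<longleftrightarrow> (\<forall>v\<in>thompsonV. \<forall>x\<in>Q2.
      c v x = sC L z v x \<otimes>\<^bsub>L\<^esub> f x \<otimes>\<^bsub>L\<^esub> inv\<^bsub>L\<^esub> (f (inv_into UNIV v x)))"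

definition Phi :: "('a, 'b) monoid_scheme \<Rightarrow> ((cantor \<Rightarrow> cantor) \<Rightarrow> cantor \<Rightarrow> 'a) \<Rightarrow> 'a \<times> (cantor \<Rightarrow> 'a) set" where
  "Phi L c = (let p = (SOME p. fst p \<in> carrier L \<and> snd p \<in> carrier (PQ L) \<and> decomp L c (fst p) (snd p))
              in (fst p, constQ L #>\<^bsub>PQ L\<^esub> snd p))"

end

theory Submission
  imports Defs
begin

definition sh :: "nat \<Rightarrow> cantor \<Rightarrow> cantor" where "sh k x = (\<lambda>i. x (i + k))"
definition o0 :: cantor where "o0 = (\<lambda>_. False)"

lemma pre_nth: "pre m y i = (if i < length m then m ! i else y (i - length m))"
  by (simp add: pre_def)

lemma in_cyl: "x \<in> cyl m \<longleftrightarrow> (\<forall>i<length m. x i = m ! i)"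
proof
  assume "x \<in> cyl m" then obtain y where "x = pre m y" by (auto simp: cyl_def)
  then show "\<forall>i<length m. x i = m ! i" by (simp add: pre_def)
next
  assume a: "\<forall>i<length m. x i = m ! i"
  have "x = pre m (sh (length m) x)" using a by (auto simp: pre_def sh_def fun_eq_iff)
  then show "x \<in> cyl m" by (auto simp: cyl_def)
qed

lemma pre_in_cyl[simp]: "pre m y \<in> cyl m" by (simp add: cyl_def)

lemma pre_sh: "x \<in> cyl m \<Longrightarrow> pre m (sh (length m) x) = x"
  by (auto simp: in_cyl pre_def sh_def fun_eq_iff)

lemma sh_pre[simp]: "sh (length m) (pre m y) = y"
  by (auto simp: pre_def sh_def fun_eq_iff)

lemma pre_append: "pre (a @ b) y = pre a (pre b y)"
  by (auto simp: pre_def fun_eq_iff nth_append)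

lemma pre_Nil[simp]: "pre [] y = y" by (simp add: pre_def)

lemma pre_cancel: "pre a y = pre a y' \<Longrightarrow> y = y'"
  by (metis sh_pre)

lemma pre_inj:
  assumes "\<And>y. pre a y = pre b y" shows "a = b"
proof -
  have len: "length a = length b"
  proof (rule ccontr)
    assume "length a \<noteq> length b"
    then consider "length a < length b" | "length b < length a" by linarith
    then show False
    proof cases
      case 1
      let ?y = "\<lambda>_::nat. \<not> b ! length a"
      have "pre a ?y (length a) = pre b ?y (length a)" using assms by simp
      then show False using 1 by (simp add: pre_def)
    next
      case 2
      let ?y = "\<lambda>_::nat. \<not> a ! length b"
      have "pre a ?y (length b) = pre b ?y (length b)" using assms by simp
      then show False using 2 by (simp add: pre_def)
    qed
  qed
  show ?thesis
  proof (rule nth_equalityI[OF len])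
    fix i assume "i < length a"
    have "pre a o0 i = pre b o0 i" using assms by simp
    then show "a ! i = b ! i" using \<open>i < length a\<close> len by (simp add: pre_def)
  qed
qed

lemma cyl_short: "length a \<le> length m \<Longrightarrow> pre m y \<in> cyl a \<longleftrightarrow> a = take (length a) m"
proof -
  assume l: "length a \<le> length m"
  have "pre m y \<in> cyl a \<longleftrightarrow> (\<forall>i<length a. m ! i = a ! i)" using l by (auto simp: in_cyl pre_def)
  also have "\<dots> \<longleftrightarrow> a = take (length a) m" using l
    by (auto simp: list_eq_iff_nth_eq)
  finally show ?thesis .
qed

lemma cyl_append_sub: "x \<in> cyl (a @ b) \<Longrightarrow> x \<in> cyl a"
proof -
  assume "x \<in> cyl (a @ b)"
  then have "\<forall>i<length a. x i = (a@b) ! i" by (auto simp: in_cyl)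
  then show ?thesis by (auto simp: in_cyl nth_append)
qed

definition pfx :: "bool list \<Rightarrow> bool list \<Rightarrow> bool" where "pfx a b \<longleftrightarrow> (\<exists>r. b = a @ r)"
definition inc :: "bool list \<Rightarrow> bool list \<Rightarrow> bool" where "inc a b \<longleftrightarrow> \<not> pfx a b \<and> \<not> pfx b a"

lemma cyl_both_pfx:
  assumes "x \<in> cyl a" "x \<in> cyl b" "length a \<le> length b" shows "pfx a b"
proof -
  have "b = take (length a) b @ drop (length a) b" by simp
  moreover have "take (length a) b = a"
    using assms by (auto simp: in_cyl intro!: nth_equalityI)
  ultimately show ?thesis unfolding pfx_def by metis
qed

lemma inc_disj: "inc a b \<Longrightarrow> x \<in> cyl a \<Longrightarrow> x \<in> cyl b \<Longrightarrow> False"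
  by (metis cyl_both_pfx inc_def nle_le)

lemma inc_sym: "inc a b \<Longrightarrow> inc b a" by (simp add: inc_def)

lemma pre_not_cyl: "inc a w \<Longrightarrow> pre w y \<notin> cyl a"
  using inc_disj inc_sym pre_in_cyl by blast

lemma pre_app_not_cyl: "inc a w \<Longrightarrow> pre (w @ r) y \<notin> cyl a"
  by (metis pre_append pre_not_cyl)


lemma cyl_same_len: "x \<in> cyl a \<Longrightarrow> x \<in> cyl b \<Longrightarrow> length a = length b \<Longrightarrow> a = b"
  by (auto simp: in_cyl list_eq_iff_nth_eq)

abbreviation iv :: "(cantor \<Rightarrow> cantor) \<Rightarrow> cantor \<Rightarrow> cantor" where "iv v \<equiv> inv_into UNIV v"

definition unif :: "nat \<Rightarrow> (cantor \<Rightarrow> cantor) \<Rightarrow> bool" where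
  "unif n v \<longleftrightarrow> (\<forall>m. length m = n \<longrightarrow> (\<exists>m'. \<forall>y. v (pre m y) = pre m' y))"

lemma pfx_cyl: "x \<in> cyl a \<Longrightarrow> length a \<le> n \<Longrightarrow> \<exists>r. map x [0..<n] = a @ r"
proof -
  assume "x \<in> cyl a" "length a \<le> n"
  then have "take (length a) (map x [0..<n]) = a" by (auto simp: in_cyl list_eq_iff_nth_eq)
  then show ?thesis by (metis append_take_drop_id)
qed

lemma x_in_cyl_map: "x \<in> cyl (map x [0..<n])" by (simp add: in_cyl)

lemma unif_mono: assumes "unif n v" "n \<le> N" shows "unif N v"
  unfolding unif_def
proof (intro allI impI)
  fix m :: "bool list" assume "length m = N"
  then have "m = take n m @ drop n m" "length (take n m) = n" using assms by auto
  then obtain m' where "\<forall>y. v (pre (take n m) y) = pre m' y" using assms unfolding unif_def by blast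
  then have "\<forall>y. v (pre m y) = pre (m' @ drop n m) y"
    by (metis \<open>m = take n m @ drop n m\<close> pre_append)
  then show "\<exists>m'. \<forall>y. v (pre m y) = pre m' y" by blast
qed

lemma represents_unif:
  assumes "represents v ms ms'" shows "\<exists>n. unif n v"
proof -
  have part: "cyl_partition ms" and len: "length ms = length ms'"
    and act: "\<forall>k<length ms. \<forall>x. v (pre (ms ! k) x) = pre (ms' ! k) x"
    using assms by (auto simp: represents_def)
  define n where "n = Max (length ` set ms)"
  have "unif n v" unfolding unif_def
  proof (intro allI impI)
    fix m :: "bool list" assume lm: "length m = n"
    obtain k where k: "k < length ms" "pre m o0 \<in> cyl (ms ! k)"
      using part unfolding cyl_partition_def by blast
    have "length (ms ! k) \<le> n" unfolding n_def using k(1) by (auto intro!: Max_ge)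
    then have "ms ! k = take (length (ms ! k)) m" using k(2) lm cyl_short by auto
    then have meq: "m = ms ! k @ drop (length (ms ! k)) m" by (metis append_take_drop_id)
    have "\<forall>y. v (pre m y) = pre (ms' ! k @ drop (length (ms ! k)) m) y"
      by (metis meq act k(1) pre_append)
    then show "\<exists>m'. \<forall>y. v (pre m y) = pre m' y" by blast
  qed
  then show ?thesis by blast
qed

lemma unif_represents:
  assumes b: "bij v" and u: "unif n v" shows "\<exists>ms ms'. represents v ms ms'"
proof -
  define ms where "ms = List.n_lists n [False, True]"
  define \<rho> where "\<rho> (m::bool list) = (SOME m'. \<forall>y. v (pre m y) = pre m' y)" for m
  have setms: "set ms = {m. length m = n}" unfolding ms_def by (auto simp: set_n_lists)
  have dms: "distinct ms" unfolding ms_def by (simp add: distinct_n_lists)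
  have rho: "\<And>(m::bool list) y. length m = n \<Longrightarrow> v (pre m y) = pre (\<rho> m) y"
  proof -
    fix m :: "bool list" and y assume "length m = n"
    then have "\<exists>m'. \<forall>y. v (pre m y) = pre m' y" using u unfolding unif_def by blast
    then show "v (pre m y) = pre (\<rho> m) y" unfolding \<rho>_def by (rule someI2_ex) blast
  qed
  define ms' where "ms' = map \<rho> ms"
  have p1: "cyl_partition ms" unfolding cyl_partition_def
  proof
    fix x
    have "map x [0..<n] \<in> set ms" using setms by simp
    then obtain k where k: "k < length ms" "ms ! k = map x [0..<n]" by (metis in_set_conv_nth)
    show "\<exists>!k. k < length ms \<and> x \<in> cyl (ms ! k)"
    proof (rule ex1I[of _ k])
      show "k < length ms \<and> x \<in> cyl (ms ! k)" using k x_in_cyl_map by simp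
      fix j assume j: "j < length ms \<and> x \<in> cyl (ms ! j)"
      have "length (ms ! j) = n" "length (ms ! k) = n" using j k setms nth_mem by blast+
      then have "ms ! j = ms ! k" using cyl_same_len j k x_in_cyl_map by metis
      then show "j = k" using dms j k nth_eq_iff_index_eq by blast
    qed
  qed
  have p2: "cyl_partition ms'" unfolding cyl_partition_def
  proof
    fix x
    obtain z where z: "x = v z" using b by (metis bij_pointE)
    obtain k where k: "k < length ms" "z \<in> cyl (ms ! k)" using p1 unfolding cyl_partition_def by blast
    have lk: "length (ms ! k) = n" using k setms nth_mem by blast
    have xk: "x \<in> cyl (ms' ! k)"
      using k z rho[OF lk, of "sh n z"] pre_sh[OF k(2)] lk ms'_def by (metis nth_map pre_in_cyl)
    show "\<exists>!k. k < length ms' \<and> x \<in> cyl (ms' ! k)"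
    proof (rule ex1I[of _ k])
      show "k < length ms' \<and> x \<in> cyl (ms' ! k)" using k xk ms'_def by simp
      fix j assume j: "j < length ms' \<and> x \<in> cyl (ms' ! j)"
      have lj: "length (ms ! j) = n" using j setms nth_mem ms'_def by auto
      obtain y where y: "x = pre (ms' ! j) y" using j by (auto simp: cyl_def)
      obtain y' where y': "x = pre (ms' ! k) y'" using xk by (auto simp: cyl_def)
      have "v (pre (ms ! j) y) = v (pre (ms ! k) y')"
        using rho[OF lj] rho[OF lk] y y' j k ms'_def by auto
      then have "pre (ms ! j) y = pre (ms ! k) y'" using b by (meson bij_def injD)
      then have "ms ! j = ms ! k" using cyl_same_len lj lk by (metis pre_in_cyl)
      then show "j = k" using dms j k nth_eq_iff_index_eq ms'_def by auto
    qed
  qed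
  have "\<forall>k < length ms. \<forall>x. v (pre (ms ! k) x) = pre (ms' ! k) x"
  proof (intro allI impI)
    fix k x assume "k < length ms"
    then have "length (ms ! k) = n" using setms nth_mem by blast
    then show "v (pre (ms ! k) x) = pre (ms' ! k) x" using rho \<open>k < length ms\<close> ms'_def by simp
  qed
  then have "represents v ms ms'" unfolding represents_def
    using p1 p2 ms'_def by auto
  then show ?thesis by blast
qed

lemma V_char: "v \<in> thompsonV \<longleftrightarrow> bij v \<and> (\<exists>n. unif n v)"
  unfolding thompsonV_def using represents_unif unif_represents by blast

lemma unif_comp: assumes "unif n v" "unif p w" shows "unif (p + n) (v \<circ> w)"
  unfolding unif_def
proof (intro allI impI)
  fix m :: "bool list" assume lm: "length m = p + n"
  have e1: "m = take p m @ drop p m" by simp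
  have ltp: "length (take p m) = p" using lm by simp
  obtain m1 where m1: "\<forall>y. w (pre (take p m) y) = pre m1 y" using assms(2) ltp unfolding unif_def by blast
  define q where "q = m1 @ drop p m"
  have lq: "length q \<ge> n" using lm q_def by simp
  have e2: "q = take n q @ drop n q" by simp
  have ltn: "length (take n q) = n" using lq by simp
  obtain q' where q': "\<forall>y. v (pre (take n q) y) = pre q' y" using assms(1) ltn unfolding unif_def by blast
  have "\<forall>y. (v \<circ> w) (pre m y) = pre (q' @ drop n q) y"
  proof
    fix y
    have "w (pre m y) = pre q y" by (metis e1 m1 pre_append q_def)
    then show "(v \<circ> w) (pre m y) = pre (q' @ drop n q) y" by (metis comp_apply e2 pre_append q')
  qed
  then show "\<exists>m'. \<forall>y. (v \<circ> w) (pre m y) = pre m' y" by blast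
qed

lemma V_comp: "v \<in> thompsonV \<Longrightarrow> w \<in> thompsonV \<Longrightarrow> v \<circ> w \<in> thompsonV"
  unfolding V_char using unif_comp bij_comp by blast

lemma unif_inv: assumes b: "bij v" and u: "unif n v" shows "\<exists>M. unif M (iv v)"
proof -
  define \<rho> where "\<rho> (m::bool list) = (SOME m'. \<forall>y. v (pre m y) = pre m' y)" for m
  have rho: "\<And>(m::bool list) y. length m = n \<Longrightarrow> v (pre m y) = pre (\<rho> m) y"
  proof -
    fix m :: "bool list" and y assume "length m = n"
    then have "\<exists>m'. \<forall>y. v (pre m y) = pre m' y" using u unfolding unif_def by blast
    then show "v (pre m y) = pre (\<rho> m) y" unfolding \<rho>_def by (rule someI2_ex) blast
  qed
  have fin: "finite {m :: bool list. length m = n}" using finite_lists_length_eq[of "UNIV::bool set" n] by simp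
  define M where "M = Max ((\<lambda>m. length (\<rho> m)) ` {m. length m = n})"
  have le: "\<And>m. length m = n \<Longrightarrow> length (\<rho> m) \<le> M" unfolding M_def using fin by (auto intro!: Max_ge)
  have "unif M (iv v)" unfolding unif_def
  proof (intro allI impI)
    fix u :: "bool list" assume lu: "length u = M"
    define z where "z = iv v (pre u o0)"
    have vz: "v z = pre u o0" unfolding z_def using b by (simp add: bij_is_surj surj_f_inv_f)
    define m where "m = map z [0..<n]"
    have lm: "length m = n" by (simp add: m_def)
    have zc: "z \<in> cyl m" unfolding m_def by (rule x_in_cyl_map)
    have "v z = pre (\<rho> m) (sh n z)" using rho[OF lm] pre_sh[OF zc] lm by metis
    then have "pre u o0 \<in> cyl (\<rho> m)" using vz by simp
    then have "\<rho> m = take (length (\<rho> m)) u" using cyl_short le[OF lm] lu by simp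
    then have ue: "u = \<rho> m @ drop (length (\<rho> m)) u" by (metis append_take_drop_id)
    have "\<forall>y. iv v (pre u y) = pre (m @ drop (length (\<rho> m)) u) y"
    proof
      fix y
      have "pre u y = v (pre (m @ drop (length (\<rho> m)) u) y)"
        by (metis ue pre_append rho[OF lm])
      then show "iv v (pre u y) = pre (m @ drop (length (\<rho> m)) u) y"
        using b by (simp add: bij_is_inj)
    qed
    then show "\<exists>m'. \<forall>y. iv v (pre u y) = pre m' y" by blast
  qed
  then show ?thesis by blast
qed

lemma V_inv: "v \<in> thompsonV \<Longrightarrow> iv v \<in> thompsonV"
  unfolding V_char using unif_inv bij_imp_bij_inv by blast

lemma V_id: "id \<in> thompsonV"
  unfolding V_char unif_def by (auto intro!: exI[of _ 0])


definition lp :: "(cantor \<Rightarrow> cantor) \<Rightarrow> cantor \<Rightarrow> bool list \<Rightarrow> bool list \<Rightarrow> bool" where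
  "lp v x m m' \<longleftrightarrow> x \<in> cyl m \<and> (\<forall>y. v (pre m y) = pre m' y)"

lemma lp_exists: assumes "v \<in> thompsonV" shows "\<exists>m m'. lp v x m m'"
proof -
  obtain n where u: "unif n v" using assms V_char by blast
  have "length (map x [0..<n]) = n" by simp
  then obtain m' where "\<forall>y. v (pre (map x [0..<n]) y) = pre m' y" using u unfolding unif_def by blast
  then show ?thesis unfolding lp_def using x_in_cyl_map by blast
qed

lemma lp_diff_le:
  assumes "lp v x m1 m1'" "lp v x m2 m2'" "length m1 \<le> length m2"
  shows "int (length m1) - int (length m1') = int (length m2) - int (length m2')"
proof -
  obtain u where u: "m2 = m1 @ u" using cyl_both_pfx assms unfolding lp_def pfx_def by blast
  have "\<And>y. pre m2' y = pre (m1' @ u) y"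
  proof -
    fix y
    have "pre m2' y = v (pre m2 y)" using assms(2) unfolding lp_def by simp
    also have "\<dots> = v (pre m1 (pre u y))" by (simp add: u pre_append)
    also have "\<dots> = pre (m1' @ u) y" using assms(1) unfolding lp_def by (simp add: pre_append)
    finally show "pre m2' y = pre (m1' @ u) y" .
  qed
  then have "m2' = m1' @ u" by (rule pre_inj)
  then show ?thesis using u by simp
qed

lemma lp_diff:
  assumes "lp v x m1 m1'" "lp v x m2 m2'"
  shows "int (length m1) - int (length m1') = int (length m2) - int (length m2')"
  using lp_diff_le[OF assms] lp_diff_le[OF assms(2,1)] by linarith

lemma log2_slope_lp:
  assumes V: "v \<in> thompsonV" and l: "lp v x m m'"
  shows "log2_slope v x = int (length m) - int (length m')"
proof -
  obtain ms ms' where r: "represents v ms ms'" using V unfolding thompsonV_def by blast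
  obtain k where k: "k < length ms" "x \<in> cyl (ms ! k)" using r unfolding represents_def cyl_partition_def by blast
  let ?P = "\<lambda>d. \<exists>ms ms'. represents v ms ms' \<and>
      (\<exists>k < length ms. x \<in> cyl (ms ! k) \<and> d = int (length (ms ! k)) - int (length (ms' ! k)))"
  have ex: "\<exists>d. ?P d" using r k by blast
  show ?thesis unfolding log2_slope_def
  proof (rule someI2_ex[OF ex])
    fix d assume "?P d"
    then obtain ms ms' k where r: "represents v ms ms'" and k: "k < length ms" "x \<in> cyl (ms ! k)"
      and d: "d = int (length (ms ! k)) - int (length (ms' ! k))" by blast
    have "lp v x (ms ! k) (ms' ! k)" using r k unfolding represents_def lp_def by blast
    then show "d = int (length m) - int (length m')" using lp_diff[OF _ l] d by simp
  qed
qed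

lemma pre_cyl_app: "pre a z \<in> cyl (a @ u) \<Longrightarrow> z \<in> cyl u"
proof -
  assume h: "pre a z \<in> cyl (a @ u)"
  show "z \<in> cyl u" unfolding in_cyl
  proof (intro allI impI)
    fix i assume "i < length u"
    then have "pre a z (length a + i) = (a @ u) ! (length a + i)" using h by (simp add: in_cyl)
    then show "z i = u ! i" by (simp add: pre_def nth_append)
  qed
qed

lemma lp_comp:
  assumes a: "lp w x a a'" and b: "lp v (w x) b b'"
  shows "\<exists>m m'. lp (v \<circ> w) x m m' \<and>
     int (length m) - int (length m') = (int (length b) - int (length b')) + (int (length a) - int (length a'))"
proof -
  have xa: "x = pre a (sh (length a) x)" using a pre_sh unfolding lp_def by metis
  have wx: "w x = pre a' (sh (length a) x)" using a xa unfolding lp_def by metis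
  have wxa: "w x \<in> cyl a'" using wx by simp
  have wxb: "w x \<in> cyl b" using b unfolding lp_def by simp
  show ?thesis
  proof (cases "length a' \<le> length b")
    case True
    then obtain u where u: "b = a' @ u" using cyl_both_pfx[OF wxa wxb] unfolding pfx_def by blast
    have "sh (length a) x \<in> cyl u" using wxb wx u pre_cyl_app by metis
    then have "x \<in> cyl (a @ u)" using xa by (metis pre_append pre_in_cyl pre_sh)
    moreover have "\<forall>y. (v \<circ> w) (pre (a @ u) y) = pre b' y"
      using a b unfolding lp_def by (simp add: pre_append u)
    ultimately show ?thesis using u unfolding lp_def by (intro exI[of _ "a @ u"] exI[of _ b']) auto
  next
    case False
    then obtain u where u: "a' = b @ u" using cyl_both_pfx[OF wxb wxa] unfolding pfx_def by fastforce
    have "\<forall>y. (v \<circ> w) (pre a y) = pre (b' @ u) y"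
      using a b unfolding lp_def by (simp add: pre_append u)
    then show ?thesis using u a unfolding lp_def by (intro exI[of _ a] exI[of _ "b' @ u"]) auto
  qed
qed

lemma slope_comp:
  assumes "v \<in> thompsonV" "w \<in> thompsonV"
  shows "log2_slope (v \<circ> w) x = log2_slope v (w x) + log2_slope w x"
proof -
  obtain a a' where a: "lp w x a a'" using lp_exists assms(2) by blast
  obtain b b' where b: "lp v (w x) b b'" using lp_exists assms(1) by blast
  obtain m m' where "lp (v \<circ> w) x m m'" and
     e: "int (length m) - int (length m') = (int (length b) - int (length b')) + (int (length a) - int (length a'))"
    using lp_comp[OF a b] by blast
  then show ?thesis using log2_slope_lp assms V_comp a b by metis
qed

lemma slope_id: "log2_slope id x = 0"
  using log2_slope_lp[OF V_id, of x "[]" "[]"] by (simp add: lp_def cyl_def)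

lemma Q2_pre: "pre m y \<in> Q2 \<longleftrightarrow> y \<in> Q2"
proof
  assume "pre m y \<in> Q2"
  then obtain N where N: "\<forall>n\<ge>N. \<not> pre m y n" by (auto simp: Q2_def)
  have "\<forall>n\<ge>N. \<not> y n"
  proof (intro allI impI)
    fix n assume "n \<ge> N"
    then have "\<not> pre m y (n + length m)" using N by simp
    then show "\<not> y n" by (simp add: pre_def)
  qed
  then show "y \<in> Q2" by (auto simp: Q2_def)
next
  assume "y \<in> Q2"
  then obtain N where N: "\<forall>n\<ge>N. \<not> y n" by (auto simp: Q2_def)
  have "\<forall>n\<ge>N + length m. \<not> pre m y n" using N by (simp add: pre_def)
  then show "pre m y \<in> Q2" by (auto simp: Q2_def)
qed

lemma V_Q2: assumes "v \<in> thompsonV" "x \<in> Q2" shows "v x \<in> Q2"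
proof -
  obtain m m' where l: "lp v x m m'" using lp_exists assms(1) by blast
  then have "x = pre m (sh (length m) x)" using pre_sh unfolding lp_def by metis
  then have "v x = pre m' (sh (length m) x)" "sh (length m) x \<in> Q2"
    using l assms(2) Q2_pre unfolding lp_def by metis+
  then show ?thesis using Q2_pre by simp
qed

lemma Vinv_Q2: "v \<in> thompsonV \<Longrightarrow> x \<in> Q2 \<Longrightarrow> iv v x \<in> Q2"
  using V_Q2 V_inv by blast

lemma V_bij: "v \<in> thompsonV \<Longrightarrow> bij v" by (simp add: V_char)

lemma V_inv_f: "v \<in> thompsonV \<Longrightarrow> iv v (v x) = x"
  using V_bij bij_is_inj inv_into_f_f by (metis UNIV_I)

lemma V_f_inv: "v \<in> thompsonV \<Longrightarrow> v (iv v x) = x"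
  using V_bij bij_is_surj surj_f_inv_f by metis

lemma iv_comp: "v \<in> thompsonV \<Longrightarrow> w \<in> thompsonV \<Longrightarrow> iv (v \<circ> w) x = iv w (iv v x)"
proof -
  assume a: "v \<in> thompsonV" "w \<in> thompsonV"
  have "(v \<circ> w) (iv w (iv v x)) = x" using a by (simp add: V_f_inv)
  then have "iv (v \<circ> w) ((v \<circ> w) (iv w (iv v x))) = iv (v \<circ> w) x" by simp
  then show ?thesis using V_inv_f[OF V_comp[OF a]] by simp
qed

lemma o0_Q2: "o0 \<in> Q2" by (simp add: Q2_def o0_def)


definition sw :: "bool list \<Rightarrow> bool list \<Rightarrow> cantor \<Rightarrow> cantor" where
  "sw a b x = (if x \<in> cyl a then pre b (sh (length a) x) else if x \<in> cyl b then pre a (sh (length b) x) else x)"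

lemma sw_a: "sw a b (pre a y) = pre b y" by (simp add: sw_def)
lemma sw_b: "inc a b \<Longrightarrow> sw a b (pre b y) = pre a y" by (simp add: sw_def pre_not_cyl)
lemma sw_out: "x \<notin> cyl a \<Longrightarrow> x \<notin> cyl b \<Longrightarrow> sw a b x = x" by (simp add: sw_def)

lemma sw_inv: assumes "inc a b" shows "sw a b (sw a b x) = x"
proof -
  consider "x \<in> cyl a" | "x \<in> cyl b" | "x \<notin> cyl a" "x \<notin> cyl b" by blast
  then show ?thesis
  proof cases
    case 1 then show ?thesis using sw_a sw_b assms by (metis pre_sh)
  next
    case 2 then show ?thesis using sw_a sw_b assms by (metis pre_sh)
  qed (simp add: sw_out)
qed

lemma sw_bij: "inc a b \<Longrightarrow> bij (sw a b)"
  by (rule o_bij[of "sw a b"]) (auto simp: sw_inv fun_eq_iff)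

lemma sw_V: assumes "inc a b" shows "sw a b \<in> thompsonV"
proof -
  define n where "n = max (length a) (length b)"
  have "unif n (sw a b)" unfolding unif_def
  proof (intro allI impI)
    fix m :: "bool list" assume lm: "length m = n"
    show "\<exists>m'. \<forall>y. sw a b (pre m y) = pre m' y"
    proof (cases "a = take (length a) m")
      case True
      then have m: "m = a @ drop (length a) m" by (metis append_take_drop_id)
      show ?thesis by (rule exI[of _ "b @ drop (length a) m"]) (metis m pre_append sw_a)
    next
      case F1: False
      show ?thesis
      proof (cases "b = take (length b) m")
        case True
        then have m: "m = b @ drop (length b) m" by (metis append_take_drop_id)
        show ?thesis by (rule exI[of _ "a @ drop (length b) m"]) (metis m pre_append sw_b assms)
      next
        case False
        have "\<forall>y. pre m y \<notin> cyl a \<and> pre m y \<notin> cyl b" using F1 False cyl_short lm n_def by simp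
        then show ?thesis using sw_out by blast
      qed
    qed
  qed
  then show ?thesis using V_char sw_bij assms by blast
qed

lemma replicate_cyl: "o0 \<notin> cyl a \<Longrightarrow> length a \<le> k \<Longrightarrow> pre (replicate k False) y \<notin> cyl a"
proof
  assume a: "o0 \<notin> cyl a" "length a \<le> k" "pre (replicate k False) y \<in> cyl a"
  have "\<forall>i<length a. o0 i = a ! i"
  proof (intro allI impI)
    fix i assume "i < length a"
    then have "pre (replicate k False) y i = a ! i" using a(3) by (simp add: in_cyl)
    then show "o0 i = a ! i" using a(2) \<open>i < length a\<close> by (simp add: pre_def o0_def)
  qed
  then show False using a(1) by (simp add: in_cyl)
qed

lemma o0_pre: "pre (replicate k False) o0 = o0"
  by (auto simp: pre_def o0_def fun_eq_iff)

lemma sw_o0: assumes "inc a b" "o0 \<notin> cyl a" "o0 \<notin> cyl b"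
  shows "sw a b o0 = o0" "log2_slope (sw a b) o0 = 0"
proof -
  show "sw a b o0 = o0" using assms by (simp add: sw_out)
  define k where "k = max (length a) (length b)"
  have "lp (sw a b) o0 (replicate k False) (replicate k False)"
    unfolding lp_def using assms replicate_cyl k_def
    by (metis max.cobounded1 max.cobounded2 o0_pre pre_in_cyl sw_out)
  then show "log2_slope (sw a b) o0 = 0" using log2_slope_lp sw_V assms by fastforce
qed

lemma inc_app: "inc a b \<Longrightarrow> inc (a @ r) (b @ s)"
  unfolding inc_def pfx_def
  by (metis append.assoc append_eq_append_conv2)

lemma inc_sib: "inc (a @ [False]) (a @ [True])" "inc (a @ [True]) (a @ [False])"
  unfolding inc_def pfx_def by auto

lemma notin_app: "x \<notin> cyl a \<Longrightarrow> x \<notin> cyl (a @ r)"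
  using cyl_append_sub by blast

lemma pre_app_cyl: "pre (a @ [e]) y \<in> cyl (a @ [e']) \<longleftrightarrow> e = e'"
  by (auto simp: in_cyl pre_def nth_append)

lemma pre_app_in: "pre (a @ r) y \<in> cyl a"
  by (metis pre_append pre_in_cyl)

lemma split_cyl: "x \<in> cyl a \<Longrightarrow> \<exists>e y. x = pre (a @ [e]) y"
proof -
  assume "x \<in> cyl a"
  then have "x = pre a (sh (length a) x)" by (simp add: pre_sh)
  also have "sh (length a) x = pre [sh (length a) x 0] (sh 1 (sh (length a) x))"
    by (auto simp: pre_def sh_def fun_eq_iff)
  finally show ?thesis by (metis pre_append)
qed

lemma sw_commutator:
  assumes ab: "inc a b"
  defines "a0 \<equiv> a @ [False]" and "a1 \<equiv> a @ [True]" and "b0 \<equiv> b @ [False]" and "b1 \<equiv> b @ [True]"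
  shows "sw a b x = (sw a0 b0 \<circ> (sw a0 a1 \<circ> sw b0 b1) \<circ> sw a0 b0 \<circ> (sw a0 a1 \<circ> sw b0 b1)) x"
proof -
  have i1: "inc a0 b0" "inc a0 a1" "inc b0 b1" "inc a1 b0" "inc a0 b1" "inc a1 b1"
    using inc_app[OF ab] inc_sib unfolding a0_def a1_def b0_def b1_def by auto
  have nb: "\<And>r s y. pre (a @ r) y \<notin> cyl (b @ s)" "\<And>r s y. pre (b @ r) y \<notin> cyl (a @ s)"
    using ab inc_sym notin_app pre_app_in inc_disj by blast+
  have nb': "\<And>r y. pre (a @ r) y \<notin> cyl b" "\<And>r y. pre (b @ r) y \<notin> cyl a"
    using nb[where s="[]"] by auto
  consider "x \<in> cyl a" | "x \<in> cyl b" | "x \<notin> cyl a" "x \<notin> cyl b" by blast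
  then show ?thesis
  proof cases
    case 1
    then obtain e y where x: "x = pre (a @ [e]) y" using split_cyl by blast
    have lhs: "sw a b x = pre (b @ [e]) y" by (metis x pre_append sw_a)
    show ?thesis
    proof (cases e)
      case True
      then show ?thesis using lhs x i1 nb nb' unfolding a0_def a1_def b0_def b1_def
        by (simp add: sw_a sw_b sw_out pre_app_cyl)
    next
      case False
      then show ?thesis using lhs x i1 nb nb' unfolding a0_def a1_def b0_def b1_def
        by (simp add: sw_a sw_b sw_out pre_app_cyl)
    qed
  next
    case 2
    then obtain e y where x: "x = pre (b @ [e]) y" using split_cyl by blast
    have lhs: "sw a b x = pre (a @ [e]) y" by (metis x pre_append sw_b ab)
    show ?thesis
    proof (cases e)
      case True
      then show ?thesis using lhs x i1 nb nb' unfolding a0_def a1_def b0_def b1_def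
        by (simp add: sw_a sw_b sw_out pre_app_cyl)
    next
      case False
      then show ?thesis using lhs x i1 nb nb' unfolding a0_def a1_def b0_def b1_def
        by (simp add: sw_a sw_b sw_out pre_app_cyl)
    qed
  next
    case 3
    then show ?thesis unfolding a0_def a1_def b0_def b1_def by (simp add: sw_out notin_app)
  qed
qed


definition tt :: "cantor \<Rightarrow> cantor" where
  "tt x = (if x \<in> cyl [False, False] then pre [False] (sh 2 x)
           else if x \<in> cyl [False, True] then pre [True, False] (sh 2 x)
           else pre [True, True] (sh 1 x))"

definition ti :: "cantor \<Rightarrow> cantor" where
  "ti x = (if x \<in> cyl [False] then pre [False, False] (sh 1 x)
           else if x \<in> cyl [True, False] then pre [False, True] (sh 2 x)
           else pre [True] (sh 2 x))"

lemma dec1: "x = pre [x 0] (sh 1 x)" by (auto simp: pre_def sh_def fun_eq_iff)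
lemma dec2: "x = pre [x 0, x 1] (sh 2 x)"
proof (rule ext)
  fix i show "x i = pre [x 0, x 1] (sh 2 x) i"
    by (cases i; cases "i - 1") (auto simp: pre_def sh_def)
qed

lemma sh2: "sh 2 (pre [a, b] y) = y" by (simp add: sh_def pre_def fun_eq_iff)
lemma sh1: "sh 1 (pre [a] y) = y" "sh (Suc 0) (pre [a] y) = y" by (simp_all add: sh_def pre_def fun_eq_iff)
lemma sh1': "sh 1 (pre [True, b] y) = pre [b] y" by (simp add: sh_def pre_def fun_eq_iff)
lemma cyl0: "a \<noteq> b \<Longrightarrow> pre (a # r) y \<notin> cyl (b # s)"
proof
  assume "a \<noteq> b" "pre (a # r) y \<in> cyl (b # s)"
  then have "pre (a # r) y 0 = (b # s) ! 0" by (simp add: in_cyl)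
  then show False using \<open>a \<noteq> b\<close> by (simp add: pre_def)
qed
lemma cyl1: "a' \<noteq> b' \<Longrightarrow> pre (a # a' # r) y \<notin> cyl (b # b' # s)"
proof
  assume "a' \<noteq> b'" "pre (a # a' # r) y \<in> cyl (b # b' # s)"
  then have "pre (a # a' # r) y 1 = (b # b' # s) ! 1" by (simp add: in_cyl)
  then show False using \<open>a' \<noteq> b'\<close> by (simp add: pre_def)
qed

lemma tt_FF: "tt (pre [False, False] y) = pre [False] y" by (simp add: tt_def sh2)
lemma tt_FT: "tt (pre [False, True] y) = pre [True, False] y" by (simp add: tt_def sh2 cyl1)
lemma tt_T: "tt (pre [True] y) = pre [True, True] y"
  by (simp add: tt_def cyl0 sh1)
lemma ti_F: "ti (pre [False] y) = pre [False, False] y" by (simp add: ti_def sh1)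
lemma ti_TF: "ti (pre [True, False] y) = pre [False, True] y" by (simp add: ti_def sh2 cyl0)
lemma ti_TT: "ti (pre [True, True] y) = pre [True] y" by (simp add: ti_def cyl0 cyl1 sh2)

lemma pre_cons2: "pre [a, b] y = pre [a] (pre [b] y)" using pre_append[of "[a]" "[b]"] by simp

lemma dec3: "\<exists>z. x = pre [False] z \<or> x = pre [True, False] z \<or> x = pre [True, True] z"
proof -
  have "x = pre [x 0, x 1] (sh 2 x)" by (rule dec2)
  then show ?thesis by (cases "x 0"; cases "x 1") (auto simp only: pre_cons2 intro: exI)
qed

lemma dec3': "\<exists>z. x = pre [False, False] z \<or> x = pre [False, True] z \<or> x = pre [True] z"
proof -
  have "x = pre [x 0, x 1] (sh 2 x)" by (rule dec2)
  then show ?thesis by (cases "x 0"; cases "x 1") (auto simp only: pre_cons2 intro: exI)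
qed

lemma tt_ti: "tt (ti x) = x"
  using dec3[of x] by (auto simp only: ti_F ti_TF ti_TT tt_FF tt_FT tt_T)

lemma ti_tt: "ti (tt x) = x"
  using dec3'[of x] by (auto simp only: ti_F ti_TF ti_TT tt_FF tt_FT tt_T)

lemma tt_V: "tt \<in> thompsonV"
proof -
  have "bij tt" by (rule o_bij[of ti]) (auto simp: fun_eq_iff tt_ti ti_tt)
  moreover have "unif 2 tt" unfolding unif_def
  proof (intro allI impI)
    fix m :: "bool list" assume "length m = 2"
    then obtain p q where m: "m = [p, q]"
      by (metis (no_types, lifting) One_nat_def Suc_1 length_0_conv length_Suc_conv)
    show "\<exists>m'. \<forall>y. tt (pre m y) = pre m' y"
    proof (cases p)
      case True
      then show ?thesis using tt_T m pre_cons2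
        by (metis (full_types) append_Cons append_Nil pre_append)
    next
      case False
      then show ?thesis using tt_FF tt_FT m by (cases q) auto
    qed
  qed
  ultimately show ?thesis using V_char by blast
qed

lemma tt_o0: "tt o0 = o0" "log2_slope tt o0 = 1"
proof -
  have o: "o0 = pre [False, False] o0" using o0_pre[of 2] by (simp add: numeral_2_eq_2)
  have o1: "o0 = pre [False] o0" using o0_pre[of 1] by simp
  show "tt o0 = o0" using o o1 tt_FF by metis
  have "lp tt o0 [False, False] [False]" unfolding lp_def using o tt_FF by (metis pre_in_cyl)
  then show "log2_slope tt o0 = 1" using log2_slope_lp tt_V by fastforce
qed

lemma tt_Tcons: "tt (pre (True # r) y) = pre (True # True # r) y"
  using tt_T[of "pre r y"] pre_append[of "[True]" r] pre_append[of "[True, True]" r] by simp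

lemma transitive: assumes "x \<in> Q2" shows "\<exists>g\<in>thompsonV. g o0 = x"
proof (cases "x = o0")
  case True then show ?thesis using V_id by (intro bexI[of _ id]) auto
next
  case False
  obtain N where N: "\<forall>n\<ge>N. \<not> x n" using assms by (auto simp: Q2_def)
  define m where "m = map x [0..<N]"
  have xm: "x = pre m o0" using N by (auto simp: m_def pre_def o0_def fun_eq_iff)
  have mT: "True \<in> set m"
  proof (rule ccontr)
    assume "True \<notin> set m"
    have "\<forall>i. \<not> x i"
    proof
      fix i show "\<not> x i"
      proof (cases "i < N")
        case True then have "x i \<in> set m" by (simp add: m_def)
        then show ?thesis using \<open>True \<notin> set m\<close> by auto
      next
        case False then show ?thesis using N by simp
      qed
    qed
    then have "x = o0" by (auto simp: o0_def)
    then show False using False by simp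
  qed
  define a where "a = replicate (Suc N) False"
  have "inc a m" unfolding inc_def pfx_def
  proof
    show "\<not> (\<exists>r. m = a @ r)"
    proof
      assume "\<exists>r. m = a @ r" then obtain r where "m = a @ r" by blast
      then have "length m \<ge> Suc N" by (simp add: a_def)
      then show False by (simp add: m_def)
    qed
    show "\<not> (\<exists>r. a = m @ r)"
    proof
      assume "\<exists>r. a = m @ r" then obtain r where "a = m @ r" by blast
      then have "True \<in> set a" using mT by simp
      then show False by (simp add: a_def)
    qed
  qed
  then have "sw a m \<in> thompsonV" "sw a m o0 = x" using sw_V sw_a o0_pre xm a_def by metis+
  then show ?thesis by blast
qed



definition code :: "bool list set \<Rightarrow> bool" where
  "code A \<longleftrightarrow> finite A \<and> (\<forall>x. \<exists>!a. a \<in> A \<and> x \<in> cyl a)"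

lemma code_uniq: "code A \<Longrightarrow> a \<in> A \<Longrightarrow> b \<in> A \<Longrightarrow> x \<in> cyl a \<Longrightarrow> x \<in> cyl b \<Longrightarrow> a = b"
  unfolding code_def by blast

lemma code_inc: assumes "code A" "a \<in> A" "b \<in> A" "a \<noteq> b" shows "inc a b"
proof (rule ccontr)
  assume "\<not> inc a b"
  then obtain p q r where pq: "(p = a \<and> q = b) \<or> (p = b \<and> q = a)" "q = p @ r" unfolding inc_def pfx_def by blast
  have pA: "p \<in> A" "q \<in> A" using pq assms by auto
  have "pre q o0 \<in> cyl p" "pre q o0 \<in> cyl q" using pq pre_app_in by auto
  then have "p = q" using code_uniq[OF assms(1) pA] by blast
  then show False using pq assms(4) by blast
qed

lemma code_uniq0: "code A \<Longrightarrow> a \<in> A \<Longrightarrow> b \<in> A \<Longrightarrow> x \<in> cyl a \<Longrightarrow> x \<in> cyl b \<Longrightarrow> a = b"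
  unfolding code_def by blast

lemma code_image:
  assumes V: "g \<in> thompsonV" and c: "code A" and act: "\<forall>a\<in>A. \<forall>y. g (pre a y) = pre (\<pi> a) y"
  shows "code (\<pi> ` A)" "inj_on \<pi> A"
proof -
  show inj: "inj_on \<pi> A"
  proof (rule inj_onI)
    fix a b assume ab: "a \<in> A" "b \<in> A" "\<pi> a = \<pi> b"
    have "g (pre a o0) = g (pre b o0)" using act ab by simp
    then have "pre a o0 = pre b o0" using V_bij[OF V] by (meson bij_def injD)
    then show "a = b" using code_uniq[OF c ab(1,2)] by (metis pre_in_cyl)
  qed
  have fin: "finite (\<pi> ` A)" using c code_def by blast
  have "\<forall>x. \<exists>!b. b \<in> \<pi> ` A \<and> x \<in> cyl b"
  proof
    fix x
    obtain z where z: "x = g z" using V_bij[OF V] by (metis bij_pointE)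
    obtain a where a: "a \<in> A" "z \<in> cyl a" using c unfolding code_def by blast
    have xa: "x \<in> cyl (\<pi> a)" using a z act pre_sh by (metis pre_in_cyl)
    show "\<exists>!b. b \<in> \<pi> ` A \<and> x \<in> cyl b"
    proof (rule ex1I[of _ "\<pi> a"])
      show "\<pi> a \<in> \<pi> ` A \<and> x \<in> cyl (\<pi> a)" using a xa by simp
      fix b assume "b \<in> \<pi> ` A \<and> x \<in> cyl b"
      then obtain a' where a': "a' \<in> A" "b = \<pi> a'" "x \<in> cyl (\<pi> a')" by blast
      obtain y where y: "x = pre (\<pi> a') y" using a'(3) by (auto simp: cyl_def)
      obtain y' where y': "x = pre (\<pi> a) y'" using xa by (auto simp: cyl_def)
      have "g (pre a' y) = g (pre a y')" using act a a' y y' by simp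
      then have "pre a' y = pre a y'" using V_bij[OF V] by (meson bij_def injD)
      then have "a' = a" using code_uniq[OF c a'(1) a(1)] by (metis pre_in_cyl)
      then show "b = \<pi> a" using a' by simp
    qed
  qed
  then show "code (\<pi> ` A)" using fin unfolding code_def by blast
qed

lemma code_Nil: "code A \<Longrightarrow> [] \<in> A \<Longrightarrow> A = {[]}"
proof -
  assume c: "code A" "[] \<in> A"
  have "\<And>a. a \<in> A \<Longrightarrow> a = []"
  proof -
    fix a assume "a \<in> A"
    have "pre a o0 \<in> cyl []" by (simp add: cyl_def)
    then show "a = []" using code_uniq[OF c(1) \<open>a \<in> A\<close> c(2)] by (metis pre_in_cyl)
  qed
  then show ?thesis using c by blast
qed

lemma code_card1: assumes "code A" "card A = 1" shows "A = {[]}"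
proof -
  obtain a where A: "A = {a}" using assms card_1_singletonE by blast
  show ?thesis
  proof (cases a)
    case Nil then show ?thesis using A by simp
  next
    case (Cons e r)
    let ?x = "pre [\<not> e] o0"
    obtain b where "b \<in> A" "?x \<in> cyl b" using assms unfolding code_def by blast
    then have "?x \<in> cyl (e # r)" using A Cons by simp
    then have "?x 0 = (e # r) ! 0" by (simp add: in_cyl)
    then show ?thesis by (simp add: pre_def)
  qed
qed

lemma code_sibling:
  assumes c: "code A" and two: "2 \<le> card A"
  shows "\<exists>u. u @ [False] \<in> A \<and> u @ [True] \<in> A"
proof -
  have fin: "finite A" and ne: "A \<noteq> {}" using c two unfolding code_def by auto
  have "Max (length ` A) \<in> length ` A" using fin ne by (intro Max_in) auto
  then obtain w where w1: "w \<in> A" "length w = Max (length ` A)" by auto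
  have w: "w \<in> A" "\<forall>a\<in>A. length a \<le> length w" using w1 fin by auto
  have "w \<noteq> []"
  proof
    assume "w = []"
    then have "A = {[]}" using code_Nil c w by simp
    then show False using two by simp
  qed
  then obtain u e where we: "w = u @ [e]" by (metis rev_exhaust)
  define s where "s = u @ [\<not> e]"
  obtain a where a: "a \<in> A" "pre s o0 \<in> cyl a" using c unfolding code_def by blast
  have la: "length a \<le> length s" using w(2) a(1) we s_def by simp
  have at: "a = take (length a) s" using cyl_short la a(2) by blast
  have "a = s"
  proof (rule ccontr)
    assume "a \<noteq> s"
    have "length a \<noteq> length s"
    proof
      assume "length a = length s" then have "a = s" using at by simp
      then show False using \<open>a \<noteq> s\<close> by simp
    qed
    then have "length a < length s" using la by simp
    then have "length a \<le> length u" using s_def by simp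
    then have "take (length a) s = take (length a) w" using s_def we by simp
    then have "a = take (length a) w" using at by simp
    moreover have "length a \<le> length w" using \<open>length a \<le> length u\<close> we by simp
    ultimately have "pre w o0 \<in> cyl a" using cyl_short by blast
    then have "a = w" using code_uniq[OF c a(1) w(1)] by (metis pre_in_cyl)
    then show False using \<open>length a < length s\<close> we s_def by simp
  qed
  then have "s \<in> A" using a by simp
  show ?thesis
  proof (cases e)
    case True then show ?thesis using \<open>s \<in> A\<close> w(1) we s_def by (intro exI[of _ u]) simp
  next
    case False then show ?thesis using \<open>s \<in> A\<close> w(1) we s_def by (intro exI[of _ u]) simp
  qed
qed

lemma code_merge:
  assumes c: "code A" and u0: "u @ [False] \<in> A" and u1: "u @ [True] \<in> A"
  shows "code (insert u (A - {u @ [False], u @ [True]}))" "u \<notin> A"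
proof -
  show un: "u \<notin> A"
  proof
    assume "u \<in> A"
    have "pre (u @ [False]) o0 \<in> cyl u" by (rule pre_app_in)
    then have "u = u @ [False]" using code_uniq[OF c \<open>u \<in> A\<close> u0] by (metis pre_in_cyl)
    then show False by simp
  qed
  let ?A = "insert u (A - {u @ [False], u @ [True]})"
  have fin: "finite ?A" using c code_def by simp
  have "\<forall>x. \<exists>!b. b \<in> ?A \<and> x \<in> cyl b"
  proof
    fix x
    obtain a where a: "a \<in> A" "x \<in> cyl a" using c unfolding code_def by blast
    have ex: "\<exists>b. b \<in> ?A \<and> x \<in> cyl b"
    proof (cases "a = u @ [False] \<or> a = u @ [True]")
      case True
      then have "x \<in> cyl u" using a(2) cyl_append_sub by blast
      then show ?thesis by blast
    next
      case False then show ?thesis using a by blast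
    qed
    have split_u: "x \<in> cyl u \<Longrightarrow> x \<in> cyl (u @ [False]) \<or> x \<in> cyl (u @ [True])"
    proof -
      assume "x \<in> cyl u"
      then obtain e y where "x = pre (u @ [e]) y" using split_cyl by blast
      then show ?thesis by (cases e) auto
    qed
    have key: "b = u" if "b \<in> ?A" "x \<in> cyl b" "x \<in> cyl u" for b
    proof (rule ccontr)
      assume "b \<noteq> u"
      then have bA: "b \<in> A" "b \<noteq> u @ [False]" "b \<noteq> u @ [True]" using that by auto
      from split_u[OF that(3)] show False
      proof
        assume "x \<in> cyl (u @ [False])"
        then show False using code_uniq[OF c bA(1) u0 that(2)] bA by blast
      next
        assume "x \<in> cyl (u @ [True])"
        then show False using code_uniq[OF c bA(1) u1 that(2)] bA by blast
      qed
    qed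
    show "\<exists>!b. b \<in> ?A \<and> x \<in> cyl b"
    proof (rule ex_ex1I[OF ex])
      fix b1 b2 assume b1: "b1 \<in> ?A \<and> x \<in> cyl b1" and b2: "b2 \<in> ?A \<and> x \<in> cyl b2"
      show "b1 = b2"
      proof (cases "b1 = u \<or> b2 = u")
        case True
        then show ?thesis using key b1 b2 by metis
      next
        case False
        then have "b1 \<in> A" "b2 \<in> A" using b1 b2 by auto
        then show ?thesis using code_uniq[OF c] b1 b2 by blast
      qed
    qed
  qed
  then show "code ?A" using fin unfolding code_def by blast
qed

fun W :: "nat \<Rightarrow> bool list set" where
  "W 0 = {[]}"
| "W (Suc M) = insert [False] (Cons True ` W M)"

lemma W_F: "1 \<le> M \<Longrightarrow> [False] \<in> W M" by (cases M) auto

lemma W_R: "replicate M True \<in> W M" by (induction M) auto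

lemma W_T: "s \<in> W M \<Longrightarrow> 1 \<le> M \<Longrightarrow> s \<noteq> [False] \<Longrightarrow> \<exists>r. s = True # r"
  by (cases M) auto

lemma W_step: "W (Suc M) = (W M - {replicate M True}) \<union> {replicate M True @ [False], replicate (Suc M) True}"
proof (induction M)
  case 0 then show ?case by auto
next
  case (Suc M)
  have "W (Suc (Suc M)) = insert [False] (Cons True ` W (Suc M))" by simp
  also have "\<dots> = insert [False] (Cons True ` ((W M - {replicate M True}) \<union> {replicate M True @ [False], replicate (Suc M) True}))"
    using Suc by simp
  also have "\<dots> = (W (Suc M) - {replicate (Suc M) True}) \<union> {replicate (Suc M) True @ [False], replicate (Suc (Suc M)) True}"
    by auto
  finally show ?case .
qed

lemma o0_not_T: "o0 \<notin> cyl (True # r)"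
proof
  assume "o0 \<in> cyl (True # r)"
  then have "o0 0 = (True # r) ! 0" by (simp add: in_cyl)
  then show False by (simp add: o0_def)
qed


locale cg =
  fixes L :: "('a, 'b) monoid_scheme" (structure)
  assumes cgL: "comm_group L"
begin

sublocale comm_group L by (rule cgL)

lemma coc_mem: "c \<in> Coc L \<Longrightarrow> v \<in> thompsonV \<Longrightarrow> x \<in> Q2 \<Longrightarrow> c v x \<in> carrier L"
  unfolding Coc_def by (auto dest!: PiE_mem)

lemma coc_eq: "c \<in> Coc L \<Longrightarrow> v \<in> thompsonV \<Longrightarrow> w \<in> thompsonV \<Longrightarrow> x \<in> Q2 \<Longrightarrow>
   c (v \<circ> w) x = c v x \<otimes> c w (iv v x)"
  unfolding Coc_def by blast

lemma iv_id: "iv id x = x" using V_inv_f[OF V_id, of x] by simp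

lemma coc_id: assumes "c \<in> Coc L" "x \<in> Q2" shows "c id x = \<one>"
proof -
  have "c (id \<circ> id) x = c id x \<otimes> c id x" using coc_eq[OF assms(1) V_id V_id assms(2)] iv_id by simp
  then have "c id x \<otimes> c id x = c id x" by simp
  then show ?thesis using coc_mem[OF assms(1) V_id assms(2)] by simp
qed

lemma iv_fix: "g \<in> thompsonV \<Longrightarrow> g o0 = o0 \<Longrightarrow> iv g o0 = o0"
  by (metis V_inv_f)

lemma coc_hom: assumes "c \<in> Coc L" "g \<in> thompsonV" "h \<in> thompsonV" "g o0 = o0"
  shows "c (g \<circ> h) o0 = c g o0 \<otimes> c h o0"
  using coc_eq[OF assms(1-3) o0_Q2] iv_fix[OF assms(2,4)] by simp

definition HH :: "((cantor \<Rightarrow> cantor) \<Rightarrow> cantor \<Rightarrow> 'a) \<Rightarrow> (cantor \<Rightarrow> cantor) \<Rightarrow> bool" where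
  "HH c h \<longleftrightarrow> h \<in> thompsonV \<and> h o0 = o0 \<and> c h o0 = c tt o0 [^] log2_slope h o0"

context
  fixes c assumes cC: "c \<in> Coc L"
begin

lemma zeta_mem: "c tt o0 \<in> carrier L" using coc_mem[OF cC tt_V o0_Q2] .

lemma H_comp: assumes "HH c g" "HH c h" shows "HH c (g \<circ> h)"
proof -
  have V: "g \<in> thompsonV" "h \<in> thompsonV" "g o0 = o0" "h o0 = o0" using assms HH_def by auto
  have "log2_slope (g \<circ> h) o0 = log2_slope g o0 + log2_slope h o0" using slope_comp V by simp
  moreover have "c (g \<circ> h) o0 = c g o0 \<otimes> c h o0" using coc_hom cC V by simp
  ultimately show ?thesis using assms V V_comp unfolding HH_def by (simp add: int_pow_mult zeta_mem)
qed

lemma H_cancel: assumes "HH c g" "HH c (g \<circ> h)" "h \<in> thompsonV" "h o0 = o0" shows "HH c h"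
proof -
  have V: "g \<in> thompsonV" "g o0 = o0" using assms HH_def by auto
  have s: "log2_slope (g \<circ> h) o0 = log2_slope g o0 + log2_slope h o0" using slope_comp V assms by simp
  have "c (g \<circ> h) o0 = c g o0 \<otimes> c h o0" using coc_hom cC V assms by simp
  then have "c tt o0 [^] log2_slope g o0 \<otimes> c tt o0 [^] log2_slope h o0 = c tt o0 [^] log2_slope g o0 \<otimes> c h o0"
    using assms(1,2) s unfolding HH_def by (simp add: int_pow_mult zeta_mem)
  then have "c h o0 = c tt o0 [^] log2_slope h o0"
    using coc_mem[OF cC assms(3) o0_Q2] zeta_mem by simp
  then show ?thesis using assms unfolding HH_def by simp
qed

lemma H_id: "HH c id"
  unfolding HH_def using V_id coc_id[OF cC o0_Q2] slope_id by simp

lemma H_tt: "HH c tt"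
  unfolding HH_def using tt_V tt_o0 zeta_mem by simp

lemma sq_one: assumes "inc p q" "o0 \<notin> cyl p" "o0 \<notin> cyl q"
  shows "c (sw p q) o0 \<otimes> c (sw p q) o0 = \<one>"
proof -
  have "sw p q \<circ> sw p q = id" using sw_inv[OF assms(1)] by (auto simp: fun_eq_iff)
  then show ?thesis using coc_hom[OF cC sw_V sw_V sw_o0(1)] assms coc_id[OF cC o0_Q2] by metis
qed

lemma ac4: "x \<in> carrier L \<Longrightarrow> y \<in> carrier L \<Longrightarrow> ((x \<otimes> y) \<otimes> x) \<otimes> y = (x \<otimes> x) \<otimes> (y \<otimes> y)"
  by (simp add: m_ac)

lemma H_sw: assumes ab: "inc a b" and oa: "o0 \<notin> cyl a" and ob: "o0 \<notin> cyl b"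
  shows "HH c (sw a b)"
proof -
  define a0 a1 b0 b1 where "a0 = a @ [False]" "a1 = a @ [True]" "b0 = b @ [False]" "b1 = b @ [True]"
  have i1: "inc a0 b0" "inc a0 a1" "inc b0 b1"
    using inc_app[OF ab] inc_sib unfolding a0_a1_b0_b1_def by auto
  have oo: "o0 \<notin> cyl a0" "o0 \<notin> cyl a1" "o0 \<notin> cyl b0" "o0 \<notin> cyl b1"
    using oa ob notin_app unfolding a0_a1_b0_b1_def by auto
  define S1 S2 S3 where "S1 = sw a0 b0" "S2 = sw a0 a1" "S3 = sw b0 b1"
  have SV: "S1 \<in> thompsonV" "S2 \<in> thompsonV" "S3 \<in> thompsonV" using sw_V i1 S1_S2_S3_def by auto
  have So: "S1 o0 = o0" "S2 o0 = o0" "S3 o0 = o0" using sw_o0(1) i1 oo S1_S2_S3_def by auto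
  have Sq: "c S1 o0 \<otimes> c S1 o0 = \<one>" "c S2 o0 \<otimes> c S2 o0 = \<one>" "c S3 o0 \<otimes> c S3 o0 = \<one>"
    using sq_one i1 oo S1_S2_S3_def by auto
  have Sm: "c S1 o0 \<in> carrier L" "c S2 o0 \<in> carrier L" "c S3 o0 \<in> carrier L"
    using coc_mem[OF cC _ o0_Q2] SV by auto
  define T where "T = S2 \<circ> S3"
  have TV: "T \<in> thompsonV" "T o0 = o0" using V_comp SV So T_def by auto
  have cT: "c T o0 = c S2 o0 \<otimes> c S3 o0" using coc_hom[OF cC SV(2,3) So(2)] T_def by simp
  have Tm: "c T o0 \<in> carrier L" using cT Sm by simp
  have Tsq: "c T o0 \<otimes> c T o0 = \<one>"
  proof -
    have "c T o0 \<otimes> c T o0 = (c S2 o0 \<otimes> c S2 o0) \<otimes> (c S3 o0 \<otimes> c S3 o0)" using cT Sm by (simp add: m_ac)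
    then show ?thesis using Sq by simp
  qed
  have eq: "sw a b = ((S1 \<circ> T) \<circ> S1) \<circ> T"
    using sw_commutator[OF ab] unfolding S1_S2_S3_def T_def a0_a1_b0_b1_def by (auto simp: fun_eq_iff)
  have V1: "S1 \<circ> T \<in> thompsonV" "(S1 \<circ> T) o0 = o0" using V_comp SV TV So by auto
  have V2: "(S1 \<circ> T) \<circ> S1 \<in> thompsonV" "((S1 \<circ> T) \<circ> S1) o0 = o0" using V_comp SV V1 So by auto
  have "c (sw a b) o0 = ((c S1 o0 \<otimes> c T o0) \<otimes> c S1 o0) \<otimes> c T o0"
    unfolding eq coc_hom[OF cC V2(1) TV(1) V2(2)] coc_hom[OF cC V1(1) SV(1) V1(2)]
      coc_hom[OF cC SV(1) TV(1) So(1)] ..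
  also have "\<dots> = \<one>" using ac4[OF Sm(1) Tm] Sq(1) Tsq by simp
  finally show ?thesis unfolding HH_def using sw_V[OF ab] sw_o0[OF ab oa ob] by simp
qed

end
end


lemma rep_app_F: "u @ [False] = replicate p False \<Longrightarrow> u = replicate (length u) False"
proof -
  assume h: "u @ [False] = replicate p False"
  have "set u \<subseteq> set (replicate p False)" unfolding h[symmetric] by auto
  then have "\<forall>y\<in>set u. y = False" by (auto split: if_splits)
  then show ?thesis by (simp add: replicate_length_same)
qed

lemma rep_app_T: "u @ [True] \<noteq> replicate p False"
proof
  assume "u @ [True] = replicate p False"
  moreover have "True \<in> set (u @ [True])" by simp
  ultimately have "True \<in> set (replicate p False)" by simp
  then show False by simp
qed

lemma R_cons: "1 \<le> M \<Longrightarrow> \<exists>r. replicate M True = True # r"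
  by (cases M) auto

lemma W1: "W 1 = {[False], [True]}" by (simp add: numeral_eq_Suc)

context cg begin
context fixes c assumes cC: "c \<in> Coc L" begin

lemma LL: "card A = n \<Longrightarrow> code A \<Longrightarrow> 2 \<le> n \<Longrightarrow> replicate p False \<in> A \<Longrightarrow>
  \<exists>g \<pi>. HH c g \<and> (\<forall>a\<in>A. \<forall>y. g (pre a y) = pre (\<pi> a) y) \<and> \<pi> ` A = W (n - 1) \<and> \<pi> (replicate p False) = [False]"
proof (induction n arbitrary: A p rule: less_induct)
  case (less n)
  note cA = less.prems(2) and two = less.prems(3) and oA = less.prems(4)
  obtain u where u0: "u @ [False] \<in> A" and u1: "u @ [True] \<in> A"
    using code_sibling[OF cA] less.prems(1) two by blast
  define A' where "A' = insert u (A - {u @ [False], u @ [True]})"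
  have cA': "code A'" and uA: "u \<notin> A" using code_merge[OF cA u0 u1] A'_def by auto
  have fin: "finite A" using cA code_def by blast
  have sub: "{u @ [False], u @ [True]} \<subseteq> A" using u0 u1 by simp
  have c2: "card {u @ [False], u @ [True]} = 2" by simp
  have "card (A - {u @ [False], u @ [True]}) = n - 2"
    using card_Diff_subset[OF _ sub] c2 less.prems(1) by simp
  moreover have "u \<notin> A - {u @ [False], u @ [True]}" using uA by simp
  moreover have "finite (A - {u @ [False], u @ [True]})" using fin by simp
  ultimately have "card A' = Suc (n - 2)" unfolding A'_def by (simp add: card_insert_disjoint)
  then have cardA': "card A' = n - 1" using two by simp
  show ?case
  proof (cases "n = 2")
    case True
    then have "card A' = 1" using cardA' by simp
    then have A'1: "A' = {[]}" using code_card1[OF cA'] by simp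
    have "u \<in> A'" unfolding A'_def by simp
    then have u_nil: "u = []" using A'1 by simp
    have "A - {u @ [False], u @ [True]} \<subseteq> A' - {u}" unfolding A'_def using uA by blast
    moreover have "A' - {u} = {}" using A'1 u_nil by simp
    ultimately have "A - {u @ [False], u @ [True]} = {}" by blast
    then have "A \<subseteq> {u @ [False], u @ [True]}" by blast
    then have "A = {u @ [False], u @ [True]}" using sub by (rule subset_antisym)
    then have AA: "A = {[False], [True]}" using u_nil by simp
    have "replicate p False \<noteq> [True]" using rep_app_T[of "[]"] by (metis append_Nil)
    then have rF: "replicate p False = [False]" using oA AA by blast
    have "HH c id" by (rule H_id[OF cC])
    moreover have "\<forall>a\<in>A. \<forall>y. id (pre a y) = pre (id a) y" by simp
    moreover have "id ` A = W (n - 1)" using AA True W1 by simp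
    moreover have "id (replicate p False) = [False]" using rF by simp
    ultimately show ?thesis by blast
  next
    case False
    then have n3: "3 \<le> n" using two by simp
    have ltn: "n - 1 < n" using n3 by simp
    have two': "2 \<le> n - 1" using n3 by simp
    define M where "M = n - 2"
    have M1: "1 \<le> M" using n3 M_def by simp
    have nM: "n - 1 - 1 = M" "n - 1 = Suc M" using M_def n3 by auto
    show ?thesis
    proof (cases "u @ [False] = replicate p False")
      case True
      define q where "q = length u"
      have uq: "u = replicate q False" using rep_app_F[OF True] q_def by simp
      have "replicate q False \<in> A'" using uq A'_def by simp
      then obtain g' \<pi>' where g': "HH c g'" and act': "\<forall>a\<in>A'. \<forall>y. g' (pre a y) = pre (\<pi>' a) y"
        and im': "\<pi>' ` A' = W M" and o': "\<pi>' (replicate q False) = [False]"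
        using less.IH[OF ltn cardA' cA' two'] nM by metis
      have g'V: "g' \<in> thompsonV" using g' HH_def by simp
      have inj': "inj_on \<pi>' A'" using code_image[OF g'V cA' act'] by simp
      have pu: "\<pi>' u = [False]" using o' uq by simp
      define g where "g = tt \<circ> g'"
      define \<pi> where "\<pi> a = (if a = u @ [False] then [False] else if a = u @ [True] then [True, False] else True # \<pi>' a)" for a
      have Hg: "HH c g" unfolding g_def using H_comp[OF cC] H_tt[OF cC] g' by simp
      have uA': "u \<in> A'" using A'_def by simp
      have act: "\<forall>a\<in>A. \<forall>y. g (pre a y) = pre (\<pi> a) y"
      proof (intro ballI allI)
        fix a y assume aA: "a \<in> A"
        show "g (pre a y) = pre (\<pi> a) y"
        proof (cases "a = u @ [False]")
          case True
          have "g (pre a y) = tt (g' (pre u (pre [False] y)))" using True g_def by (simp add: pre_append)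
          also have "\<dots> = tt (pre [False, False] y)" using act' uA' pu pre_cons2 by simp
          finally show ?thesis using tt_FF True \<pi>_def by simp
        next
          case F1: False
          show ?thesis
          proof (cases "a = u @ [True]")
            case True
            have "g (pre a y) = tt (g' (pre u (pre [True] y)))" using True g_def by (simp add: pre_append)
            also have "\<dots> = tt (pre [False, True] y)" using act' uA' pu pre_cons2 by simp
            finally show ?thesis using tt_FT True \<pi>_def by simp
          next
            case False
            then have aA': "a \<in> A'" "a \<noteq> u" using aA F1 uA A'_def by auto
            have "\<pi>' a \<in> W M" using im' aA' by blast
            moreover have "\<pi>' a \<noteq> [False]" using inj' aA' uA' pu inj_on_eq_iff by metis
            ultimately obtain r where r: "\<pi>' a = True # r" using W_T M1 by blast
            have "g (pre a y) = tt (pre (True # r) y)" using act' aA' r g_def by simp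
            also have "\<dots> = pre (True # \<pi>' a) y" using tt_Tcons r by simp
            finally show ?thesis using F1 False \<pi>_def by simp
          qed
        qed
      qed
      have im1: "\<pi>' ` (A - {u @ [False], u @ [True]}) = W M - {[False]}"
      proof -
        have "A - {u @ [False], u @ [True]} = A' - {u}" unfolding A'_def using uA by blast
        then have "\<pi>' ` (A - {u @ [False], u @ [True]}) = \<pi>' ` A' - {\<pi>' u}"
          using inj' uA' by (simp add: inj_on_image_set_diff)
        then show ?thesis using im' pu by simp
      qed
      have "\<pi> ` A = {[False], [True, False]} \<union> Cons True ` (\<pi>' ` (A - {u @ [False], u @ [True]}))"
      proof -
        have "\<pi> ` A = \<pi> ` {u @ [False], u @ [True]} \<union> \<pi> ` (A - {u @ [False], u @ [True]})"
          using u0 u1 by blast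
        also have "\<pi> ` {u @ [False], u @ [True]} = {[False], [True, False]}" by (simp add: \<pi>_def insert_commute)
        also have "\<pi> ` (A - {u @ [False], u @ [True]}) = (\<lambda>a. True # \<pi>' a) ` (A - {u @ [False], u @ [True]})"
          by (rule image_cong) (simp_all add: \<pi>_def)
        also have "\<dots> = Cons True ` (\<pi>' ` (A - {u @ [False], u @ [True]}))" by (simp only: image_image)
        finally show ?thesis .
      qed
      also have "\<dots> = insert [False] (Cons True ` W M)" using im1 W_F[OF M1] by auto
      also have "\<dots> = W (n - 1)" using nM by simp
      finally have im: "\<pi> ` A = W (n - 1)" .
      have "\<pi> (replicate p False) = [False]" using True \<pi>_def by simp
      then show ?thesis using Hg act im by blast
    next
      case False
      have "replicate p False \<noteq> u @ [True]" using rep_app_T by metis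
      then have pA': "replicate p False \<in> A'" using False oA unfolding A'_def by simp
      obtain g' \<pi>' where g': "HH c g'" and act': "\<forall>a\<in>A'. \<forall>y. g' (pre a y) = pre (\<pi>' a) y"
        and im': "\<pi>' ` A' = W M" and o': "\<pi>' (replicate p False) = [False]"
        using less.IH[OF ltn cardA' cA' two' pA'] nM by metis
      have g'V: "g' \<in> thompsonV" using g' HH_def by simp
      have inj': "inj_on \<pi>' A'" using code_image[OF g'V cA' act'] by simp
      have cW: "code (W M)" using code_image[OF g'V cA' act'] im' by simp
      have uA': "u \<in> A'" using A'_def by simp
      define s where "s = \<pi>' u"
      define R where "R = replicate M True"
      have sW: "s \<in> W M" using s_def im' uA' by blast
      have RW: "R \<in> W M" using R_def W_R by simp
      have up: "u \<noteq> replicate p False" using uA oA by blast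
      have sF: "s \<noteq> [False]"
      proof
        assume "s = [False]"
        then have "\<pi>' u = \<pi>' (replicate p False)" using o' s_def by simp
        then have "u = replicate p False" using inj' uA' pA' by (simp add: inj_on_eq_iff)
        then show False using up by simp
      qed
      have RF: "R \<noteq> [False]" using R_cons[OF M1] R_def by auto
      have os: "o0 \<notin> cyl s" using W_T[OF sW M1 sF] o0_not_T by blast
      obtain rR where "R = True # rR" using R_cons[OF M1] R_def by blast
      then have oR: "o0 \<notin> cyl R" using o0_not_T by simp
      define \<sigma> where "\<sigma> = (if s = R then id else sw s R)"
      have Hs: "HH c \<sigma>"
      proof (cases "s = R")
        case True then show ?thesis using H_id[OF cC] \<sigma>_def by simp
      next
        case False
        then have "inc s R" using code_inc[OF cW sW RW] by simp
        then show ?thesis using H_sw[OF cC] os oR False \<sigma>_def by simp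
      qed
      have sig1: "\<sigma> (pre s y) = pre R y" for y
        using \<sigma>_def sw_a by (cases "s = R") auto
      have sig2: "\<sigma> (pre R y) = pre s y" for y
        using \<sigma>_def sw_b code_inc[OF cW sW RW] by (cases "s = R") auto
      have sig3: "\<sigma> (pre w y) = pre w y" if "w \<in> W M" "w \<noteq> s" "w \<noteq> R" for w y
      proof (cases "s = R")
        case True then show ?thesis using \<sigma>_def by simp
      next
        case False
        have "inc s w" using code_inc[OF cW sW that(1)] that(2) by simp
        moreover have "inc R w" using code_inc[OF cW RW that(1)] that(3) by simp
        ultimately
        show ?thesis using False \<sigma>_def sw_out pre_not_cyl by simp
      qed
      define g where "g = \<sigma> \<circ> g'"
      define \<pi> where "\<pi> a = (if a = u @ [False] then R @ [False] else if a = u @ [True] then R @ [True]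
         else if \<pi>' a = R then s else \<pi>' a)" for a
      have Hg: "HH c g" unfolding g_def using H_comp[OF cC] Hs g' by simp
      have act: "\<forall>a\<in>A. \<forall>y. g (pre a y) = pre (\<pi> a) y"
      proof (intro ballI allI)
        fix a y assume aA: "a \<in> A"
        show "g (pre a y) = pre (\<pi> a) y"
        proof (cases "a = u @ [False]")
          case True
          have "g (pre a y) = \<sigma> (g' (pre u (pre [False] y)))" using True g_def by (simp add: pre_append)
          also have "\<dots> = \<sigma> (pre s (pre [False] y))" using act' uA' s_def by simp
          also have "\<dots> = pre (R @ [False]) y" using sig1 by (simp add: pre_append)
          finally show ?thesis using True \<pi>_def by simp
        next
          case F1: False
          show ?thesis
          proof (cases "a = u @ [True]")
            case True
            have "g (pre a y) = \<sigma> (g' (pre u (pre [True] y)))" using True g_def by (simp add: pre_append)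
            also have "\<dots> = \<sigma> (pre s (pre [True] y))" using act' uA' s_def by simp
            also have "\<dots> = pre (R @ [True]) y" using sig1 by (simp add: pre_append)
            finally show ?thesis using True F1 \<pi>_def by simp
          next
            case False
            then have aA': "a \<in> A'" "a \<noteq> u" using aA F1 uA A'_def by auto
            have aW: "\<pi>' a \<in> W M" using im' aA' by blast
            have as: "\<pi>' a \<noteq> s" using inj' aA' uA' s_def inj_on_eq_iff by metis
            have "g (pre a y) = \<sigma> (pre (\<pi>' a) y)" using act' aA' g_def by simp
            also have "\<dots> = pre (if \<pi>' a = R then s else \<pi>' a) y"
              using sig2 sig3[OF aW as] by (cases "\<pi>' a = R") auto
            finally show ?thesis using F1 False \<pi>_def by simp
          qed
        qed
      qed
      have im1: "\<pi>' ` (A - {u @ [False], u @ [True]}) = W M - {s}"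
      proof -
        have "A - {u @ [False], u @ [True]} = A' - {u}" unfolding A'_def using uA by blast
        then have "\<pi>' ` (A - {u @ [False], u @ [True]}) = \<pi>' ` A' - {\<pi>' u}"
          using inj' uA' by (simp add: inj_on_image_set_diff)
        then show ?thesis using im' s_def by simp
      qed
      define f where "f b = (if b = R then s else b)" for b
      have fim: "f ` (W M - {s}) = W M - {R}"
      proof
        show "f ` (W M - {s}) \<subseteq> W M - {R}" using f_def sW by auto
        show "W M - {R} \<subseteq> f ` (W M - {s})"
        proof
          fix w assume w: "w \<in> W M - {R}"
          show "w \<in> f ` (W M - {s})"
          proof (cases "w = s")
            case True
            then have "f R = w" "R \<in> W M - {s}" using f_def w RW by auto
            then show ?thesis by blast
          next
            case False
            then have "f w = w" "w \<in> W M - {s}" using f_def w by auto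
            then show ?thesis by (metis image_eqI)
          qed
        qed
      qed
      have "\<pi> ` A = {R @ [False], R @ [True]} \<union> f ` (\<pi>' ` (A - {u @ [False], u @ [True]}))"
      proof -
        have "\<pi> ` A = \<pi> ` {u @ [False], u @ [True]} \<union> \<pi> ` (A - {u @ [False], u @ [True]})"
          using u0 u1 by blast
        also have "\<pi> ` {u @ [False], u @ [True]} = {R @ [False], R @ [True]}" by (simp add: \<pi>_def insert_commute)
        also have "\<pi> ` (A - {u @ [False], u @ [True]}) = (\<lambda>a. f (\<pi>' a)) ` (A - {u @ [False], u @ [True]})"
          by (rule image_cong) (simp_all add: \<pi>_def f_def)
        also have "\<dots> = f ` (\<pi>' ` (A - {u @ [False], u @ [True]}))" by (simp only: image_image)
        finally show ?thesis .
      qed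
      also have "\<dots> = (W M - {R}) \<union> {R @ [False], replicate (Suc M) True}"
        using im1 fim R_def by (auto simp: replicate_append_same)
      also have "\<dots> = W (n - 1)" using nM W_step R_def by simp
      finally have im: "\<pi> ` A = W (n - 1)" .
      have "\<pi> (replicate p False) = [False]"
        using \<pi>_def o' False rep_app_T RF by metis
      then show ?thesis using Hg act im by blast
    qed
  qed
qed

end
end

lemma pre_o0: "pre m o0 = o0 \<Longrightarrow> m = replicate (length m) False"
proof -
  assume h: "pre m o0 = o0"
  have "\<forall>y\<in>set m. y = False"
  proof
    fix y assume "y \<in> set m"
    then obtain i where i: "i < length m" "m ! i = y" by (metis in_set_conv_nth)
    have "pre m o0 i = o0 i" using h by simp
    then show "y = False" using i by (simp add: pre_def o0_def)
  qed
  then show ?thesis by (simp add: replicate_length_same)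
qed

lemma o0_F: "o0 = pre [False] o0" using o0_pre[of 1] by simp

context cg begin
context fixes c assumes cC: "c \<in> Coc L" begin

lemma PP: "code C \<Longrightarrow> [False] \<in> C \<Longrightarrow> card {w\<in>C. \<rho> w \<noteq> w} = k \<Longrightarrow> (\<forall>w\<in>C. \<rho> w \<in> C) \<Longrightarrow>
  \<rho> [False] = [False] \<Longrightarrow> h \<in> thompsonV \<Longrightarrow> (\<forall>w\<in>C. \<forall>y. h (pre w y) = pre (\<rho> w) y) \<Longrightarrow> HH c h"
proof (induction k arbitrary: h \<rho> rule: less_induct)
  case (less k)
  note cC' = less.prems(1) and FC = less.prems(2) and rC = less.prems(4) and rF = less.prems(5)
    and hV = less.prems(6) and act = less.prems(7)
  have fin: "finite C" using cC' code_def by blast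
  have e: "h (pre [False] o0) = pre [False] o0" using act FC rF by simp
  have ho: "h o0 = o0" using e by (simp only: o0_F[symmetric])
  have inj: "inj_on \<rho> C" using code_image[OF hV cC' act] by simp
  show ?case
  proof (cases "{w\<in>C. \<rho> w \<noteq> w} = {}")
    case True
    have "h = id"
    proof
      fix x
      obtain w where w: "w \<in> C" "x \<in> cyl w" using cC' unfolding code_def by blast
      have rw: "\<rho> w = w" using True w by blast
      have xe: "x = pre w (sh (length w) x)" using pre_sh[OF w(2)] by simp
      have "h (pre w (sh (length w) x)) = pre (\<rho> w) (sh (length w) x)" using act w(1) by simp
      then show "h x = id x" using rw xe by simp
    qed
    then show ?thesis using H_id[OF cC] by (simp only:)
  next
    case False
    then obtain w where w: "w \<in> C" "\<rho> w \<noteq> w" by blast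
    define w' where "w' = \<rho> w"
    have w'C: "w' \<in> C" using rC w w'_def by blast
    have wF: "w \<noteq> [False]" using w rF by blast
    have w'F: "w' \<noteq> [False]"
    proof
      assume "w' = [False]"
      then have "\<rho> w = \<rho> [False]" using rF w'_def by simp
      then have "w = [False]" using inj w FC by (simp add: inj_on_eq_iff)
      then show False using wF by simp
    qed
    have ww': "w \<noteq> w'" using w w'_def by simp
    have iw: "inc w w'" using code_inc[OF cC' w(1) w'C ww'] .
    have "pre [False] o0 \<in> cyl [False]" by simp
    then have o0F: "o0 \<in> cyl [False]" by (simp only: o0_F[symmetric])
    have ow: "o0 \<notin> cyl w" using code_uniq[OF cC' w(1) FC _ o0F] wF by blast
    have ow': "o0 \<notin> cyl w'" using code_uniq[OF cC' w'C FC _ o0F] w'F by blast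
    define \<sigma> where "\<sigma> = sw w w'"
    have Hs: "HH c \<sigma>" using H_sw[OF cC iw ow ow'] \<sigma>_def by simp
    have sV: "\<sigma> \<in> thompsonV" using Hs HH_def by simp
    define h2 where "h2 = \<sigma> \<circ> h"
    define \<rho>2 where "\<rho>2 v = (if \<rho> v = w then w' else if \<rho> v = w' then w else \<rho> v)" for v
    have h2V: "h2 \<in> thompsonV" using V_comp sV hV h2_def by simp
    have act2: "\<forall>v\<in>C. \<forall>y. h2 (pre v y) = pre (\<rho>2 v) y"
    proof (intro ballI allI)
      fix v y assume vC: "v \<in> C"
      have e: "h2 (pre v y) = \<sigma> (pre (\<rho> v) y)" using act vC h2_def by simp
      show "h2 (pre v y) = pre (\<rho>2 v) y"
      proof (cases "\<rho> v = w")
        case True then show ?thesis using e \<sigma>_def \<rho>2_def sw_a by simp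
      next
        case F1: False
        show ?thesis
        proof (cases "\<rho> v = w'")
          case True then show ?thesis using e \<sigma>_def \<rho>2_def sw_b iw F1 by simp
        next
          case False
          have rvC: "\<rho> v \<in> C" using rC vC by blast
          have n1: "w \<noteq> \<rho> v" using F1 by simp
          have n2: "w' \<noteq> \<rho> v" using False by simp
          have "inc w (\<rho> v)" using code_inc[OF cC' w(1) rvC n1] .
          moreover have "inc w' (\<rho> v)" using code_inc[OF cC' w'C rvC n2] .
          ultimately have "\<sigma> (pre (\<rho> v) y) = pre (\<rho> v) y"
            using \<sigma>_def sw_out pre_not_cyl by simp
          then show ?thesis using e \<rho>2_def F1 False by simp
        qed
      qed
    qed
    have r2C: "\<forall>v\<in>C. \<rho>2 v \<in> C" using rC w(1) w'C \<rho>2_def by simp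
    have r2F: "\<rho>2 [False] = [False]" using rF wF w'F \<rho>2_def by simp
    have sub: "{v\<in>C. \<rho>2 v \<noteq> v} \<subset> {v\<in>C. \<rho> v \<noteq> v}"
    proof
      show "{v\<in>C. \<rho>2 v \<noteq> v} \<subseteq> {v\<in>C. \<rho> v \<noteq> v}"
      proof
        fix v assume v: "v \<in> {v\<in>C. \<rho>2 v \<noteq> v}"
        show "v \<in> {v\<in>C. \<rho> v \<noteq> v}"
        proof (rule ccontr)
          assume "v \<notin> {v\<in>C. \<rho> v \<noteq> v}"
          then have rv: "\<rho> v = v" using v by simp
          have "\<rho> v \<noteq> w" using rv w by auto
          moreover have "\<rho> v \<noteq> w'"
          proof
            assume "\<rho> v = w'"
            then have "\<rho> w' = \<rho> w" using rv w'_def by simp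
            then have "w' = w" using inj w'C w(1) by (simp add: inj_on_eq_iff)
            then show False using ww' by simp
          qed
          ultimately have "\<rho>2 v = v" using rv \<rho>2_def by simp
          then show False using v by simp
        qed
      qed
      have "\<rho>2 w = w" using w w'_def \<rho>2_def by simp
      then show "{v\<in>C. \<rho>2 v \<noteq> v} \<noteq> {v\<in>C. \<rho> v \<noteq> v}" using w by blast
    qed
    have lt: "card {v\<in>C. \<rho>2 v \<noteq> v} < k" using psubset_card_mono[OF _ sub] fin less.prems(3) by simp
    have "HH c h2" by (rule less.IH[OF lt cC' FC refl r2C r2F h2V act2])
    then show ?thesis using H_cancel[OF cC Hs _ hV ho] h2_def by simp
  qed
qed

lemma stab: assumes hV: "h \<in> thompsonV" and ho: "h o0 = o0" shows "HH c h"
proof -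
  obtain n where "unif n h" using hV V_char by blast
  then have u: "unif (Suc n) h" using unif_mono by simp
  define N where "N = Suc n"
  define A where "A = {m :: bool list. length m = N}"
  have finA: "finite A" unfolding A_def using finite_lists_length_eq[of "UNIV::bool set" N] by simp
  have cA: "code A" unfolding code_def
  proof (intro conjI finA allI)
    fix x
    show "\<exists>!a. a \<in> A \<and> x \<in> cyl a"
    proof (rule ex1I[of _ "map x [0..<N]"])
      show "map x [0..<N] \<in> A \<and> x \<in> cyl (map x [0..<N])" using x_in_cyl_map A_def by simp
      fix a assume "a \<in> A \<and> x \<in> cyl a"
      then show "a = map x [0..<N]" using cyl_same_len[OF _ x_in_cyl_map] A_def by simp
    qed
  qed
  have RFA: "replicate N False \<in> A" "replicate N True \<in> A" using A_def by auto
  have "replicate N False \<noteq> replicate N True" using N_def by simp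
  then have "card {replicate N False, replicate N True} = 2" by simp
  then have c2: "2 \<le> card A" using card_mono[OF finA] RFA by (metis empty_subsetI insert_subset)
  define \<rho> where "\<rho> m = (SOME m'. \<forall>y. h (pre m y) = pre m' y)" for m :: "bool list"
  have actA: "\<forall>a\<in>A. \<forall>y. h (pre a y) = pre (\<rho> a) y"
  proof (intro ballI allI)
    fix a y assume "a \<in> A"
    then have "\<exists>m'. \<forall>y. h (pre a y) = pre m' y" using u A_def N_def unfolding unif_def by simp
    then show "h (pre a y) = pre (\<rho> a) y" unfolding \<rho>_def by (rule someI2_ex) blast
  qed
  define B where "B = \<rho> ` A"
  have cB: "code B" and injr: "inj_on \<rho> A" using code_image[OF hV cA actA] B_def by auto
  have cardB: "card B = card A" using card_image[OF injr] B_def by simp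
  define q where "q = length (\<rho> (replicate N False))"
  have "pre (\<rho> (replicate N False)) o0 = o0" using actA RFA(1) o0_pre ho by metis
  then have rq: "\<rho> (replicate N False) = replicate q False" using pre_o0 q_def by simp
  have qB: "replicate q False \<in> B" using rq RFA(1) B_def by (metis image_eqI)
  obtain gA \<pi>A where gA: "HH c gA" and actgA: "\<forall>a\<in>A. \<forall>y. gA (pre a y) = pre (\<pi>A a) y"
    and imA: "\<pi>A ` A = W (card A - 1)" and oA: "\<pi>A (replicate N False) = [False]"
    using LL[OF cC refl cA c2 RFA(1)] by blast
  obtain gB \<pi>B where gB: "HH c gB" and actgB: "\<forall>b\<in>B. \<forall>y. gB (pre b y) = pre (\<pi>B b) y"
    and imB: "\<pi>B ` B = W (card A - 1)" and oB: "\<pi>B (replicate q False) = [False]"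
    using LL[OF cC refl cB _ qB] c2 cardB by metis
  define K where "K = card A - 1"
  have K1: "1 \<le> K" using c2 K_def by simp
  have gAV: "gA \<in> thompsonV" and gBV: "gB \<in> thompsonV" using gA gB HH_def by auto
  have injA: "inj_on \<pi>A A" using code_image[OF gAV cA actgA] by simp
  have cW: "code (W K)" using code_image[OF gAV cA actgA] imA K_def by simp
  define h' where "h' = gB \<circ> h \<circ> iv gA"
  have h'V: "h' \<in> thompsonV" unfolding h'_def using V_comp V_inv gAV gBV hV by simp
  define \<rho>W where "\<rho>W w = \<pi>B (\<rho> (inv_into A \<pi>A w))" for w
  have actW: "\<forall>w\<in>W K. \<forall>y. h' (pre w y) = pre (\<rho>W w) y"
  proof (intro ballI allI)
    fix w y assume wW: "w \<in> W K"
    define a where "a = inv_into A \<pi>A w"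
    have aA: "a \<in> A" "\<pi>A a = w" using wW imA K_def a_def by (auto intro: inv_into_into f_inv_into_f)
    have "iv gA (pre w y) = pre a y" using actgA aA V_inv_f[OF gAV] by metis
    then have "h' (pre w y) = gB (pre (\<rho> a) y)" using actA aA h'_def by simp
    also have "\<dots> = pre (\<pi>B (\<rho> a)) y" using actgB aA B_def by simp
    finally show "h' (pre w y) = pre (\<rho>W w) y" using \<rho>W_def a_def by simp
  qed
  have rWC: "\<forall>w\<in>W K. \<rho>W w \<in> W K"
  proof
    fix w assume "w \<in> W K"
    then have "inv_into A \<pi>A w \<in> A" using imA K_def by (metis inv_into_into)
    then show "\<rho>W w \<in> W K" using \<rho>W_def imB B_def K_def by blast
  qed
  have "inv_into A \<pi>A [False] = replicate N False" using oA injA RFA(1) by (metis inv_into_f_f)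
  then have rWF: "\<rho>W [False] = [False]" using \<rho>W_def rq oB by simp
  have "HH c h'" using PP[OF cW W_F[OF K1] refl rWC rWF h'V actW] .
  moreover have "h' \<circ> gA = gB \<circ> h"
  proof
    fix x show "(h' \<circ> gA) x = (gB \<circ> h) x" using V_inv_f[OF gAV, of x] h'_def by simp
  qed
  ultimately have "HH c (gB \<circ> h)" using H_comp[OF cC _ gA] by metis
  then show ?thesis using H_cancel[OF cC gB _ hV ho] by simp
qed

end
end

context cg begin

lemma sC_val: "v \<in> thompsonV \<Longrightarrow> x \<in> Q2 \<Longrightarrow> sC L z v x = z [^] log2_slope v (iv v x)"
  by (simp add: sC_def)

lemma sC_mem: assumes z: "z \<in> carrier L" shows "sC L z \<in> Coc L"
proof -
  have "sC L z \<in> (\<Pi>\<^sub>E v\<in>thompsonV. \<Pi>\<^sub>E x\<in>Q2. carrier L)"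
    unfolding sC_def using z by (simp add: restrict_PiE_iff)
  moreover have "\<forall>v\<in>thompsonV. \<forall>w\<in>thompsonV. \<forall>x\<in>Q2.
        sC L z (v \<circ> w) x = sC L z v x \<otimes> sC L z w (iv v x)"
  proof (intro ballI)
    fix v w x assume V: "v \<in> thompsonV" "w \<in> thompsonV" and x: "x \<in> Q2"
    have y: "iv v x \<in> Q2" using Vinv_Q2 V x by simp
    have "log2_slope (v \<circ> w) (iv (v \<circ> w) x) = log2_slope v (iv v x) + log2_slope w (iv w (iv v x))"
      using slope_comp[OF V] iv_comp[OF V] V_f_inv[OF V(2)] by simp
    then show "sC L z (v \<circ> w) x = sC L z v x \<otimes> sC L z w (iv v x)"
      using sC_val V_comp[OF V] V x y z by (simp add: int_pow_mult)
  qed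
  ultimately show ?thesis unfolding Coc_def by blast
qed

definition gx :: "cantor \<Rightarrow> cantor \<Rightarrow> cantor" where
  "gx x = (SOME g. g \<in> thompsonV \<and> g o0 = x)"

lemma gx: "x \<in> Q2 \<Longrightarrow> gx x \<in> thompsonV \<and> gx x o0 = x"
  unfolding gx_def using transitive by (metis (mono_tags, lifting) someI_ex)

lemma gx_inv: "x \<in> Q2 \<Longrightarrow> iv (gx x) x = o0"
  using gx V_inv_f by metis

lemma cancel_aux: "s \<in> carrier L \<Longrightarrow> p \<in> carrier L \<Longrightarrow> q \<in> carrier L \<Longrightarrow> a \<in> carrier L \<Longrightarrow>
   s \<otimes> (a \<otimes> p) \<otimes> inv (a \<otimes> q) = s \<otimes> p \<otimes> inv q"
proof -
  assume m: "s \<in> carrier L" "p \<in> carrier L" "q \<in> carrier L" "a \<in> carrier L"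
  have "s \<otimes> (a \<otimes> p) \<otimes> inv (a \<otimes> q) = s \<otimes> (a \<otimes> p) \<otimes> (inv a \<otimes> inv q)" using m by (simp add: inv_mult)
  also have "\<dots> = (s \<otimes> p \<otimes> inv q) \<otimes> (a \<otimes> inv a)" using m by (simp only: m_ac m_closed inv_closed)
  also have "\<dots> = s \<otimes> p \<otimes> inv q" using m by (simp only: r_inv r_one m_closed inv_closed)
  finally show ?thesis .
qed

lemma cocyc_aux: "a \<in> carrier L \<Longrightarrow> b \<in> carrier L \<Longrightarrow> p \<in> carrier L \<Longrightarrow> q \<in> carrier L \<Longrightarrow> r \<in> carrier L \<Longrightarrow>
   (a \<otimes> b) \<otimes> p \<otimes> inv r = (a \<otimes> p \<otimes> inv q) \<otimes> (b \<otimes> q \<otimes> inv r)"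
proof -
  assume m: "a \<in> carrier L" "b \<in> carrier L" "p \<in> carrier L" "q \<in> carrier L" "r \<in> carrier L"
  have "(a \<otimes> p \<otimes> inv q) \<otimes> (b \<otimes> q \<otimes> inv r) = ((a \<otimes> b) \<otimes> p \<otimes> inv r) \<otimes> (q \<otimes> inv q)"
    using m by (simp only: m_ac m_closed inv_closed)
  also have "\<dots> = (a \<otimes> b) \<otimes> p \<otimes> inv r" using m by (simp only: r_inv r_one m_closed inv_closed)
  finally show ?thesis by simp
qed

context fixes c assumes cC: "c \<in> Coc L" begin

definition dd where "dd v x = c v x \<otimes> inv (sC L (c tt o0) v x)"

lemma dd_mem: "v \<in> thompsonV \<Longrightarrow> x \<in> Q2 \<Longrightarrow> dd v x \<in> carrier L"
  unfolding dd_def using coc_mem[OF cC] sC_val zeta_mem[OF cC] by simp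

lemma s_mem: "v \<in> thompsonV \<Longrightarrow> x \<in> Q2 \<Longrightarrow> sC L (c tt o0) v x \<in> carrier L"
  using sC_val zeta_mem[OF cC] by simp

lemma dd_coc: assumes V: "v \<in> thompsonV" "w \<in> thompsonV" and x: "x \<in> Q2"
  shows "dd (v \<circ> w) x = dd v x \<otimes> dd w (iv v x)"
proof -
  have y: "iv v x \<in> Q2" using Vinv_Q2 V x by simp
  have sc: "sC L (c tt o0) \<in> Coc L" using sC_mem zeta_mem[OF cC] by simp
  have e1: "c (v \<circ> w) x = c v x \<otimes> c w (iv v x)" using coc_eq[OF cC V x] .
  have e2: "sC L (c tt o0) (v \<circ> w) x = sC L (c tt o0) v x \<otimes> sC L (c tt o0) w (iv v x)" using coc_eq[OF sc V x] .
  show ?thesis unfolding dd_def e1 e2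
    using coc_mem[OF cC] s_mem V x y by (simp add: inv_mult m_ac)
qed

lemma dd_stab: "h \<in> thompsonV \<Longrightarrow> h o0 = o0 \<Longrightarrow> dd h o0 = \<one>"
proof -
  assume h: "h \<in> thompsonV" "h o0 = o0"
  have "c h o0 = c tt o0 [^] log2_slope h o0" using stab[OF cC h] HH_def by simp
  moreover have "sC L (c tt o0) h o0 = c tt o0 [^] log2_slope h o0" using sC_val h iv_fix o0_Q2 by simp
  ultimately show ?thesis unfolding dd_def using zeta_mem[OF cC] by simp
qed

definition ff where "ff = (\<lambda>x\<in>Q2. dd (gx x) x)"

lemma ff_mem: "ff \<in> carrier (PQ L)"
  unfolding ff_def PQ_def using dd_mem gx by (simp add: restrict_PiE_iff)

lemma exist: "decomp L c (c tt o0) ff"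
  unfolding decomp_def
proof (intro ballI)
  fix v x assume v: "v \<in> thompsonV" and x: "x \<in> Q2"
  define y where "y = iv v x"
  have y: "y \<in> Q2" using Vinv_Q2 v x y_def by simp
  define a where "a = gx x"
  define b where "b = gx y"
  have a: "a \<in> thompsonV" "a o0 = x" using gx x a_def by auto
  have b: "b \<in> thompsonV" "b o0 = y" using gx y b_def by auto
  define h where "h = iv a \<circ> v \<circ> b"
  have hV: "h \<in> thompsonV" using h_def V_comp V_inv a b v by simp
  have ho: "h o0 = o0" using h_def a b y_def V_f_inv[OF v] gx_inv[OF x] a_def by simp
  have ah: "a \<circ> h = v \<circ> b"
  proof
    fix z show "(a \<circ> h) z = (v \<circ> b) z" using h_def V_f_inv[OF a(1)] by simp
  qed
  have l1: "dd (a \<circ> h) x = dd a x \<otimes> dd h (iv a x)" by (rule dd_coc[OF a(1) hV x])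
  have l2: "dd h (iv a x) = \<one>" using gx_inv[OF x] a_def dd_stab[OF hV ho] by simp
  have l: "dd (a \<circ> h) x = ff x" unfolding l1 l2 using dd_mem[OF a(1) x] ff_def x a_def by simp
  have r: "dd v x \<otimes> ff y = ff x"
  proof -
    have "ff x = dd (a \<circ> h) x" using l by simp
    also have "\<dots> = dd (v \<circ> b) x" by (simp only: ah)
    also have "\<dots> = dd v x \<otimes> dd b y" using dd_coc[OF v b(1) x] y_def by simp
    also have "\<dots> = dd v x \<otimes> ff y" using ff_def y b_def by simp
    finally show ?thesis by simp
  qed
  have ffy: "ff y \<in> carrier L" and ffx: "ff x \<in> carrier L" using ff_mem x y unfolding PQ_def by auto
  have dv: "dd v x \<in> carrier L" using dd_mem v x by simp
  have sv: "sC L (c tt o0) v x \<in> carrier L" using s_mem v x by simp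
  have cv: "c v x = dd v x \<otimes> sC L (c tt o0) v x"
    unfolding dd_def using coc_mem[OF cC v x] sv by (simp add: m_assoc)
  have "sC L (c tt o0) v x \<otimes> ff x \<otimes> inv ff y = sC L (c tt o0) v x \<otimes> (dd v x \<otimes> ff y) \<otimes> inv ff y"
    using r by simp
  also have "\<dots> = sC L (c tt o0) v x \<otimes> dd v x" using ffy dv sv by (simp add: m_assoc)
  also have "\<dots> = c v x" using cv dv sv by (simp add: m_comm)
  finally show "c v x = sC L (c tt o0) v x \<otimes> ff x \<otimes> inv ff (iv v x)" using y_def by simp
qed

lemma uniq: assumes z: "z \<in> carrier L" "z' \<in> carrier L" and f: "f \<in> carrier (PQ L)" "f' \<in> carrier (PQ L)"
  and d: "decomp L c z f" "decomp L c z' f'"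
  shows "z = z' \<and> (\<exists>a\<in>carrier L. \<forall>x\<in>Q2. f' x = f x \<otimes> a)"
proof -
  have fm: "\<And>x. x \<in> Q2 \<Longrightarrow> f x \<in> carrier L" "\<And>x. x \<in> Q2 \<Longrightarrow> f' x \<in> carrier L"
    using f unfolding PQ_def by auto
  have ivt: "iv tt o0 = o0" using iv_fix tt_V tt_o0 by simp
  have st: "\<And>z. sC L z tt o0 = z [^] (1::int)" using sC_val[OF tt_V o0_Q2] ivt tt_o0 by simp
  have "c tt o0 = z" using d(1) unfolding decomp_def using tt_V o0_Q2 st ivt fm z by (simp add: m_assoc)
  moreover have "c tt o0 = z'" using d(2) unfolding decomp_def using tt_V o0_Q2 st ivt fm z by (simp add: m_assoc)
  ultimately have zz: "z = z'" by simp
  define a where "a = inv (f o0) \<otimes> f' o0"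
  have am: "a \<in> carrier L" using a_def fm o0_Q2 by simp
  have "\<forall>x\<in>Q2. f' x = f x \<otimes> a"
  proof
    fix x assume x: "x \<in> Q2"
    have g: "gx x \<in> thompsonV" using gx x by simp
    have i: "iv (gx x) x = o0" using gx_inv x by simp
    have sm: "sC L z (gx x) x \<in> carrier L" using sC_val g x z by simp
    have "sC L z (gx x) x \<otimes> f x \<otimes> inv (f o0) = sC L z (gx x) x \<otimes> f' x \<otimes> inv (f' o0)"
      using d zz g x i unfolding decomp_def by metis
    then have "sC L z (gx x) x \<otimes> (f x \<otimes> inv (f o0)) = sC L z (gx x) x \<otimes> (f' x \<otimes> inv (f' o0))"
      using sm fm x o0_Q2 by (simp add: m_assoc)
    then have e: "f x \<otimes> inv (f o0) = f' x \<otimes> inv (f' o0)" using sm fm x o0_Q2 by simp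
    have "f x \<otimes> a = (f x \<otimes> inv (f o0)) \<otimes> f' o0" using a_def fm x o0_Q2 by (simp add: m_assoc)
    also have "\<dots> = (f' x \<otimes> inv (f' o0)) \<otimes> f' o0" using e by simp
    also have "\<dots> = f' x" using fm x o0_Q2 by (simp add: m_assoc)
    finally show "f' x = f x \<otimes> a" by simp
  qed
  then show ?thesis using zz am by blast
qed

end
end

context cg begin

lemma ex_decomp: "c \<in> Coc L \<Longrightarrow> \<exists>z f. z \<in> carrier L \<and> f \<in> carrier (PQ L) \<and> decomp L c z f"
  using exist ff_mem zeta_mem by blast

lemma PQ_group: "group (PQ L)"
  unfolding PQ_def by (rule product_group) (simp add: is_group)

lemma PQ_carrier: "carrier (PQ L) = (\<Pi>\<^sub>E x\<in>Q2. carrier L)"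
  unfolding PQ_def by simp

lemma PQ_mult: "f \<otimes>\<^bsub>PQ L\<^esub> g = (\<lambda>x\<in>Q2. f x \<otimes> g x)"
  unfolding PQ_def by simp

lemma PQ_inv: "f \<in> carrier (PQ L) \<Longrightarrow> inv\<^bsub>PQ L\<^esub> f = (\<lambda>x\<in>Q2. inv (f x))"
  unfolding PQ_def by (simp add: is_group)

lemma PQ_comm: "comm_group (PQ L)"
proof (rule group.group_comm_groupI[OF PQ_group])
  fix f g assume "f \<in> carrier (PQ L)" "g \<in> carrier (PQ L)"
  then show "f \<otimes>\<^bsub>PQ L\<^esub> g = g \<otimes>\<^bsub>PQ L\<^esub> f"
    unfolding PQ_mult PQ_carrier by (intro restrict_ext m_comm) (auto dest: PiE_mem)
qed

lemma const_mem: "a \<in> carrier L \<Longrightarrow> (\<lambda>x\<in>Q2. a) \<in> constQ L"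
  unfolding constQ_def by blast

lemma N_sub: "subgroup (constQ L) (PQ L)"
proof (rule group.subgroupI[OF PQ_group])
  show "constQ L \<subseteq> carrier (PQ L)" unfolding constQ_def PQ_carrier by auto
  show "constQ L \<noteq> {}" unfolding constQ_def by auto
  fix k assume "k \<in> constQ L"
  then obtain a where a: "a \<in> carrier L" "k = (\<lambda>x\<in>Q2. a)" unfolding constQ_def by blast
  have "k \<in> carrier (PQ L)" using a PQ_carrier by simp
  then have "inv\<^bsub>PQ L\<^esub> k = (\<lambda>x\<in>Q2. inv a)" using PQ_inv a by (auto intro: restrict_ext)
  then show "inv\<^bsub>PQ L\<^esub> k \<in> constQ L" using const_mem a by simp
  fix k' assume "k' \<in> constQ L"
  then obtain b where b: "b \<in> carrier L" "k' = (\<lambda>x\<in>Q2. b)" unfolding constQ_def by blast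
  have "k \<otimes>\<^bsub>PQ L\<^esub> k' = (\<lambda>x\<in>Q2. a \<otimes> b)" unfolding PQ_mult a b by (auto intro: restrict_ext)
  then show "k \<otimes>\<^bsub>PQ L\<^esub> k' \<in> constQ L" using const_mem a b by simp
qed

lemma N_normal: "constQ L \<lhd> PQ L"
  using comm_group.subgroup_imp_normal[OF PQ_comm N_sub] .

lemma coset_shift: assumes f: "f \<in> carrier (PQ L)" and a: "a \<in> carrier L"
  shows "constQ L #>\<^bsub>PQ L\<^esub> (\<lambda>x\<in>Q2. f x \<otimes> a) = constQ L #>\<^bsub>PQ L\<^esub> f"
proof -
  define k where "k = (\<lambda>x\<in>Q2. a)"
  have kN: "k \<in> constQ L" using const_mem a k_def by simp
  have kC: "k \<in> carrier (PQ L)" using a k_def PQ_carrier by simp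
  have "(\<lambda>x\<in>Q2. f x \<otimes> a) = k \<otimes>\<^bsub>PQ L\<^esub> f"
    unfolding PQ_mult k_def using f a PQ_carrier by (intro restrict_ext) (auto simp: m_comm dest: PiE_mem)
  then have "constQ L #>\<^bsub>PQ L\<^esub> (\<lambda>x\<in>Q2. f x \<otimes> a) = (constQ L #>\<^bsub>PQ L\<^esub> k) #>\<^bsub>PQ L\<^esub> f"
    using group.coset_mult_assoc[OF PQ_group, of "constQ L" k f] subgroup.subset[OF N_sub] kC f by simp
  also have "constQ L #>\<^bsub>PQ L\<^esub> k = constQ L" using subgroup.rcos_const[OF N_sub PQ_group kN] .
  finally show ?thesis .
qed

lemma Phi_char: assumes cC: "c \<in> Coc L" and z: "z \<in> carrier L" and f: "f \<in> carrier (PQ L)"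
  and d: "decomp L c z f"
  shows "Phi L c = (z, constQ L #>\<^bsub>PQ L\<^esub> f)"
proof -
  let ?P = "\<lambda>p. fst p \<in> carrier L \<and> snd p \<in> carrier (PQ L) \<and> decomp L c (fst p) (snd p)"
  define p where "p = (SOME p. ?P p)"
  have "?P (z, f)" using z f d by simp
  then have Pp: "?P p" unfolding p_def by (rule someI)
  then obtain a where a: "a \<in> carrier L" "\<forall>x\<in>Q2. snd p x = f x \<otimes> a" and zz: "z = fst p"
    using uniq[OF cC z _ f _ d] by blast
  have "snd p = (\<lambda>x\<in>Q2. f x \<otimes> a)"
    using Pp a f unfolding PQ_carrier by (intro PiE_ext[of _ Q2 "\<lambda>_. carrier L"]) auto
  then have "constQ L #>\<^bsub>PQ L\<^esub> snd p = constQ L #>\<^bsub>PQ L\<^esub> f" using coset_shift f a by simp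
  then show ?thesis unfolding Phi_def Let_def p_def[symmetric] using zz by simp
qed

abbreviation PP0 where "PP0 \<equiv> product_group thompsonV (\<lambda>_. PQ L)"

lemma P_group: "group PP0" by (rule product_group) (simp add: PQ_group)

lemma P_carrier: "carrier PP0 = (\<Pi>\<^sub>E v\<in>thompsonV. \<Pi>\<^sub>E x\<in>Q2. carrier L)" by (simp add: PQ_carrier)

lemma Coc_PiE: "c \<in> Coc L \<Longrightarrow> c \<in> (\<Pi>\<^sub>E v\<in>thompsonV. \<Pi>\<^sub>E x\<in>Q2. carrier L)"
  unfolding Coc_def by blast

lemma P_mult: "c \<otimes>\<^bsub>PP0\<^esub> d = (\<lambda>v\<in>thompsonV. \<lambda>x\<in>Q2. c v x \<otimes> d v x)"
  by (simp add: PQ_mult)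

lemma P_inv: "c \<in> carrier PP0 \<Longrightarrow> inv\<^bsub>PP0\<^esub> c = (\<lambda>v\<in>thompsonV. \<lambda>x\<in>Q2. inv (c v x))"
proof -
  assume c: "c \<in> carrier PP0"
  have "inv\<^bsub>PP0\<^esub> c = (\<lambda>v\<in>thompsonV. inv\<^bsub>PQ L\<^esub> (c v))"
  proof -
    have c': "c \<in> (\<Pi>\<^sub>E v\<in>thompsonV. carrier (PQ L))" using c by simp
    show ?thesis using inv_product_group[OF c'] PQ_group by simp
  qed
  also have "\<dots> = (\<lambda>v\<in>thompsonV. \<lambda>x\<in>Q2. inv (c v x))"
  proof (rule restrict_ext)
    fix v assume v: "v \<in> thompsonV"
    have "c v \<in> carrier (PQ L)" using c v by (auto simp: P_carrier PQ_carrier dest: PiE_mem)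
    then show "inv\<^bsub>PQ L\<^esub> (c v) = (\<lambda>x\<in>Q2. inv (c v x))" by (rule PQ_inv)
  qed
  finally show ?thesis .
qed

lemma Coc_sub: "subgroup (Coc L) PP0"
proof (rule group.subgroupI[OF P_group])
  show "Coc L \<subseteq> carrier PP0" using Coc_PiE P_carrier by auto
  show "Coc L \<noteq> {}" using sC_mem[OF one_closed] by blast
  fix c assume cC: "c \<in> Coc L"
  have cP: "c \<in> carrier PP0" using cC Coc_PiE P_carrier by auto
  show "inv\<^bsub>PP0\<^esub> c \<in> Coc L"
    unfolding P_inv[OF cP] Coc_def
  proof (intro CollectI conjI ballI)
    show "(\<lambda>v\<in>thompsonV. \<lambda>x\<in>Q2. inv c v x) \<in> (\<Pi>\<^sub>E v\<in>thompsonV. \<Pi>\<^sub>E x\<in>Q2. carrier L)"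
      using coc_mem[OF cC] by (simp add: restrict_PiE_iff)
    fix v w x assume V: "v \<in> thompsonV" "w \<in> thompsonV" and x: "x \<in> Q2"
    have y: "iv v x \<in> Q2" using Vinv_Q2 V x by simp
    show "(\<lambda>v\<in>thompsonV. \<lambda>x\<in>Q2. inv c v x) (v \<circ> w) x =
          (\<lambda>v\<in>thompsonV. \<lambda>x\<in>Q2. inv c v x) v x \<otimes> (\<lambda>v\<in>thompsonV. \<lambda>x\<in>Q2. inv c v x) w (iv v x)"
      using V x y V_comp coc_eq[OF cC V x] coc_mem[OF cC] by (simp add: inv_mult)
  qed
  fix d assume dC: "d \<in> Coc L"
  show "c \<otimes>\<^bsub>PP0\<^esub> d \<in> Coc L"
    unfolding P_mult Coc_def
  proof (intro CollectI conjI ballI)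
    show "(\<lambda>v\<in>thompsonV. \<lambda>x\<in>Q2. c v x \<otimes> d v x) \<in> (\<Pi>\<^sub>E v\<in>thompsonV. \<Pi>\<^sub>E x\<in>Q2. carrier L)"
      using coc_mem[OF cC] coc_mem[OF dC] by (simp add: restrict_PiE_iff)
    fix v w x assume V: "v \<in> thompsonV" "w \<in> thompsonV" and x: "x \<in> Q2"
    have y: "iv v x \<in> Q2" using Vinv_Q2 V x by simp
    show "(\<lambda>v\<in>thompsonV. \<lambda>x\<in>Q2. c v x \<otimes> d v x) (v \<circ> w) x =
          (\<lambda>v\<in>thompsonV. \<lambda>x\<in>Q2. c v x \<otimes> d v x) v x \<otimes> (\<lambda>v\<in>thompsonV. \<lambda>x\<in>Q2. c v x \<otimes> d v x) w (iv v x)"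
      using V x y V_comp coc_eq[OF cC V x] coc_eq[OF dC V x] coc_mem[OF cC] coc_mem[OF dC]
      by (simp add: m_ac)
  qed
qed

lemma CocG_carrier: "carrier (CocG L) = Coc L" by (simp add: CocG_def)
lemma CocG_mult: "c \<otimes>\<^bsub>CocG L\<^esub> d = (\<lambda>v\<in>thompsonV. \<lambda>x\<in>Q2. c v x \<otimes> d v x)"
  by (simp add: CocG_def PQ_mult)

lemma CocG_group: "group (CocG L)"
  unfolding CocG_def using group.subgroup_imp_group[OF P_group Coc_sub] .

lemma CocG_comm: "comm_group (CocG L)"
proof (rule group.group_comm_groupI[OF CocG_group])
  fix c d assume "c \<in> carrier (CocG L)" "d \<in> carrier (CocG L)"
  then have cd: "c \<in> Coc L" "d \<in> Coc L" using CocG_carrier by auto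
  show "c \<otimes>\<^bsub>CocG L\<^esub> d = d \<otimes>\<^bsub>CocG L\<^esub> c"
    unfolding CocG_mult using coc_mem[OF cd(1)] coc_mem[OF cd(2)]
    by (intro restrict_ext) (simp add: m_comm)
qed

end

context cg begin

abbreviation TT where "TT \<equiv> L \<times>\<times> (PQ L Mod constQ L)"

lemma Phi_mem: assumes cC: "c \<in> Coc L" shows "Phi L c \<in> carrier TT"
proof -
  obtain z f where zf: "z \<in> carrier L" "f \<in> carrier (PQ L)" "decomp L c z f" using ex_decomp[OF cC] by blast
  then show ?thesis using Phi_char[OF cC zf] by (simp add: carrier_FactGroup)
qed

lemma Phi_mult: assumes cC: "c \<in> Coc L" and dC: "d \<in> Coc L"
  shows "Phi L (c \<otimes>\<^bsub>CocG L\<^esub> d) = Phi L c \<otimes>\<^bsub>TT\<^esub> Phi L d"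
proof -
  obtain zc fc where c: "zc \<in> carrier L" "fc \<in> carrier (PQ L)" "decomp L c zc fc" using ex_decomp[OF cC] by blast
  obtain zd fd where d: "zd \<in> carrier L" "fd \<in> carrier (PQ L)" "decomp L d zd fd" using ex_decomp[OF dC] by blast
  have cdC: "c \<otimes>\<^bsub>CocG L\<^esub> d \<in> Coc L" using monoid.m_closed[OF group.is_monoid[OF CocG_group]] cC dC CocG_carrier by metis
  have fcm: "\<And>x. x \<in> Q2 \<Longrightarrow> fc x \<in> carrier L" and fdm: "\<And>x. x \<in> Q2 \<Longrightarrow> fd x \<in> carrier L"
    using c(2) d(2) unfolding PQ_carrier by auto
  have fm: "fc \<otimes>\<^bsub>PQ L\<^esub> fd \<in> carrier (PQ L)" using monoid.m_closed[OF group.is_monoid[OF PQ_group] c(2) d(2)] .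
  have dec: "decomp L (c \<otimes>\<^bsub>CocG L\<^esub> d) (zc \<otimes> zd) (fc \<otimes>\<^bsub>PQ L\<^esub> fd)"
    unfolding decomp_def
  proof (intro ballI)
    fix v x assume v: "v \<in> thompsonV" and x: "x \<in> Q2"
    have y: "iv v x \<in> Q2" using Vinv_Q2 v x by simp
    have e1: "c v x = sC L zc v x \<otimes> fc x \<otimes> inv (fc (iv v x))" using c(3) v x unfolding decomp_def by blast
    have e2: "d v x = sC L zd v x \<otimes> fd x \<otimes> inv (fd (iv v x))" using d(3) v x unfolding decomp_def by blast
    have s: "sC L (zc \<otimes> zd) v x = sC L zc v x \<otimes> sC L zd v x"
      using sC_val v x c(1) d(1) by (simp add: int_pow_distrib)
    show "(c \<otimes>\<^bsub>CocG L\<^esub> d) v x = sC L (zc \<otimes> zd) v x \<otimes> (fc \<otimes>\<^bsub>PQ L\<^esub> fd) x \<otimes> inv ((fc \<otimes>\<^bsub>PQ L\<^esub> fd) (iv v x))"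
      unfolding CocG_mult PQ_mult s using v x y e1 e2 fcm fdm sC_val c(1) d(1)
      by (simp add: inv_mult m_ac)
  qed
  have "Phi L (c \<otimes>\<^bsub>CocG L\<^esub> d) = (zc \<otimes> zd, constQ L #>\<^bsub>PQ L\<^esub> (fc \<otimes>\<^bsub>PQ L\<^esub> fd))"
    using Phi_char[OF cdC _ fm dec] c(1) d(1) by simp
  also have "\<dots> = Phi L c \<otimes>\<^bsub>TT\<^esub> Phi L d"
    using Phi_char[OF cC c] Phi_char[OF dC d] normal.rcos_sum[OF N_normal c(2) d(2)] by simp
  finally show ?thesis .
qed

lemma Phi_inj: "inj_on (Phi L) (Coc L)"
proof (rule inj_onI)
  fix c d assume cC: "c \<in> Coc L" and dC: "d \<in> Coc L" and eq: "Phi L c = Phi L d"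
  obtain zc fc where c: "zc \<in> carrier L" "fc \<in> carrier (PQ L)" "decomp L c zc fc" using ex_decomp[OF cC] by blast
  obtain zd fd where d: "zd \<in> carrier L" "fd \<in> carrier (PQ L)" "decomp L d zd fd" using ex_decomp[OF dC] by blast
  have zz: "zc = zd" and cc: "constQ L #>\<^bsub>PQ L\<^esub> fc = constQ L #>\<^bsub>PQ L\<^esub> fd"
    using eq Phi_char[OF cC c] Phi_char[OF dC d] by auto
  have "fd \<in> constQ L #>\<^bsub>PQ L\<^esub> fc" using group.repr_independenceD[OF PQ_group N_sub d(2) cc] .
  then obtain k where k: "k \<in> constQ L" "fd = k \<otimes>\<^bsub>PQ L\<^esub> fc" unfolding r_coset_def by blast
  then obtain a where a: "a \<in> carrier L" "k = (\<lambda>x\<in>Q2. a)" unfolding constQ_def by blast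
  have fdx: "\<And>x. x \<in> Q2 \<Longrightarrow> fd x = a \<otimes> fc x" using k(2) a(2) PQ_mult by simp
  have fcm: "\<And>x. x \<in> Q2 \<Longrightarrow> fc x \<in> carrier L" using c(2) unfolding PQ_carrier by auto
  show "c = d"
  proof (rule PiE_ext[OF Coc_PiE[OF cC] Coc_PiE[OF dC]])
    fix v assume v: "v \<in> thompsonV"
    have cv: "c v \<in> (\<Pi>\<^sub>E x\<in>Q2. carrier L)" using Coc_PiE[OF cC] v by (auto dest: PiE_mem)
    have dv: "d v \<in> (\<Pi>\<^sub>E x\<in>Q2. carrier L)" using Coc_PiE[OF dC] v by (auto dest: PiE_mem)
    show "c v = d v"
    proof (rule PiE_ext[OF cv dv])
      fix x assume x: "x \<in> Q2"
      have y: "iv v x \<in> Q2" using Vinv_Q2 v x by simp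
      have sm: "sC L zc v x \<in> carrier L" using sC_val v x c(1) by simp
      have "d v x = sC L zc v x \<otimes> (a \<otimes> fc x) \<otimes> inv (a \<otimes> fc (iv v x))"
        using d(3) v x y fdx zz unfolding decomp_def by simp
      also have "\<dots> = sC L zc v x \<otimes> fc x \<otimes> inv (fc (iv v x))"
        using cancel_aux sm fcm x y a(1) by simp
      also have "\<dots> = c v x" using c(3) v x unfolding decomp_def by simp
      finally show "c v x = d v x" by simp
    qed
  qed
qed

lemma Phi_surj: "Phi L ` Coc L = carrier TT"
proof
  show "Phi L ` Coc L \<subseteq> carrier TT" using Phi_mem by blast
  show "carrier TT \<subseteq> Phi L ` Coc L"
  proof
    fix p assume "p \<in> carrier TT"
    then obtain z C where p: "p = (z, C)" "z \<in> carrier L" "C \<in> carrier (PQ L Mod constQ L)" by auto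
    then obtain f where f: "f \<in> carrier (PQ L)" "C = constQ L #>\<^bsub>PQ L\<^esub> f"
      unfolding carrier_FactGroup by blast
    have fm: "\<And>x. x \<in> Q2 \<Longrightarrow> f x \<in> carrier L" using f(1) unfolding PQ_carrier by auto
    define c where "c = (\<lambda>v\<in>thompsonV. \<lambda>x\<in>Q2. sC L z v x \<otimes> f x \<otimes> inv (f (iv v x)))"
    have sC': "sC L z \<in> Coc L" using sC_mem p(2) by simp
    have cC: "c \<in> Coc L" unfolding Coc_def
    proof (intro CollectI conjI ballI)
      show "c \<in> (\<Pi>\<^sub>E v\<in>thompsonV. \<Pi>\<^sub>E x\<in>Q2. carrier L)"
        unfolding c_def using coc_mem[OF sC'] fm Vinv_Q2 by (simp add: restrict_PiE_iff)
      fix v w x assume V: "v \<in> thompsonV" "w \<in> thompsonV" and x: "x \<in> Q2"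
      have y: "iv v x \<in> Q2" using Vinv_Q2 V x by simp
      have r: "iv w (iv v x) \<in> Q2" using Vinv_Q2 V y by simp
      have ivc: "iv (v \<circ> w) x = iv w (iv v x)" using iv_comp V by simp
      have s: "sC L z (v \<circ> w) x = sC L z v x \<otimes> sC L z w (iv v x)" using coc_eq[OF sC' V x] .
      have m: "sC L z v x \<in> carrier L" "sC L z w (iv v x) \<in> carrier L" using coc_mem[OF sC'] V x y by auto
      show "c (v \<circ> w) x = c v x \<otimes> c w (iv v x)"
        unfolding c_def using V V_comp x y ivc s
        cocyc_aux[OF m fm[OF x] fm[OF y] fm[OF r]] by simp
    qed
    have dec: "decomp L c z f" unfolding decomp_def c_def by simp
    have "Phi L c = p" using Phi_char[OF cC p(2) f(1) dec] p f by simp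
    then show "p \<in> Phi L ` Coc L" using cC by blast
  qed
qed

lemma Phi_iso: "Phi L \<in> iso (CocG L) TT"
  unfolding iso_def hom_def
  using Phi_mem Phi_mult Phi_inj Phi_surj CocG_carrier
  by (auto simp: bij_betw_def)

end

theorem mainTheorem16:
  fixes L :: "('a, 'b) monoid_scheme"
  assumes "comm_group L"
  shows "comm_group (CocG L) \<and>
    (\<forall>z\<in>carrier L. sC L z \<in> Coc L) \<and>
    (\<forall>c\<in>Coc L. (\<exists>z\<in>carrier L. \<exists>f\<in>carrier (PQ L). decomp L c z f) \<and>
           (\<forall>z f z' f'. z \<in> carrier L \<and> f \<in> carrier (PQ L) \<and> z' \<in> carrier L \<and> f' \<in> carrier (PQ L)
              \<and> decomp L c z f \<and> decomp L c z' f' \<longrightarrow>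
              z = z' \<and> (\<exists>a\<in>carrier L. \<forall>x\<in>Q2. f' x = f x \<otimes>\<^bsub>L\<^esub> a))) \<and>
    Phi L \<in> iso (CocG L) (L \<times>\<times> (PQ L Mod constQ L))"
proof -
  interpret cg L using assms by (rule cg.intro)
  have "\<forall>c\<in>Coc L. (\<exists>z\<in>carrier L. \<exists>f\<in>carrier (PQ L). decomp L c z f)"
    using ex_decomp by blast
  moreover have "\<forall>c\<in>Coc L. (\<forall>z f z' f'. z \<in> carrier L \<and> f \<in> carrier (PQ L) \<and> z' \<in> carrier L \<and> f' \<in> carrier (PQ L)
              \<and> decomp L c z f \<and> decomp L c z' f' \<longrightarrow>
              z = z' \<and> (\<exists>a\<in>carrier L. \<forall>x\<in>Q2. f' x = f x \<otimes>\<^bsub>L\<^esub> a))"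
    using uniq by blast
  ultimately show ?thesis using CocG_comm sC_mem Phi_iso by blast
qed


end
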